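(* For all $k,\ell\in\mathbb N$, \[ xC_{k+\ell+1}=\frac{(xC_\ell)\star(xC_ky)-(xC_ky)\star(xC_\ell)}{q-q^{-1}},\qquad C_{k+\ell+1}y=\frac{(xC_ky)\star(C_\ell y)-(C_\ell y)\star(xC_ky)}{q-q^{-1}}, \] where $xC_m$, $C_my$, $xC_my$ denote free (concatenation) products in $\mathbb V$.
   Context: $\mathbb F$ is a field of characteristic zero and $q\in\mathbb F$ is nonzero and not a root of unity; $[n]_q=(q^n-q^{-n})/(q-q^{-1})$. $\mathbb V$ is the free algebra on noncommuting letters $x,y$; a word is a product of letters (the empty word is $1$), and words form a basis. The $q$-shuffle product $\star$ on $\mathbb V$ is the bilinear product with $1\star v=v\star 1=v$ and, for nontrivial words $u=u_1\cdots u_r$, $v=v_1\cdots v_s$ (letters $u_i,v_j$), $u\star v=u_1\bigl((u_2\cdots u_r)\star v\bigr)+v_1\bigl(u\star(v_2\cdots v_s)\bigr)q^{(u_1,v_1)+(u_2,v_1)+\cdots+(u_r,v_1)}$, where juxtaposition is concatenation and $(x,x)=(y,y)=2$, $(x,y)=(y,x)=-2$. Set $\overline x=1$, $\overline y=-1$. A word $u_1\cdots u_n$ is Catalan if $\overline u_1+\cdots+\overline u_i\ge0$ for $1\le i\le n-1$ and $=0$ for $i=n$. For $n\in\mathbb N$, $C_n=\sum u_1u_2\cdots u_{2n}\,[1]_q[1+\overline u_1]_q[1+\overline u_1+\overline u_2]_q\cdots[1+\overline u_1+\cdots+\overline u_{2n}]_q$, summed over all Catalan words of length $2n$ (so $C_0=1$).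 *)

theory Defs
  imports Complex_Main
begin

text \<open>Letters of the free algebra V; words are lists of letters.
 Elements of V are represented as coefficient functions word => field
 (all elements considered here are finitely supported).\<close>

datatype letter = X | Y

type_synonym 'a vec = "letter list \<Rightarrow> 'a"

definition wd :: "letter list \<Rightarrow> 'a::field vec" where
  "wd u = (\<lambda>w. if w = u then 1 else 0)"

definition supp :: "'a::field vec \<Rightarrow> letter list set" where
  "supp f = {w. f w \<noteq> 0}"

definition conc :: "'a::field vec \<Rightarrow> 'a vec \<Rightarrow> 'a vec" where
  "conc f g = (\<lambda>w. \<Sum>i\<le>length w. f (take i w) * g (drop i w))"

definition prep :: "letter \<Rightarrow> 'a::field vec \<Rightarrow> 'a vec" where
  "prep a F = (\<lambda>w. case w of [] \<Rightarrow> 0 | c # w' \<Rightarrow> if c = a then F w' else 0)"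

definition bform :: "letter \<Rightarrow> letter \<Rightarrow> int" where
  "bform a b = (if a = b then 2 else -2)"

fun qsh :: "'a::field \<Rightarrow> letter list \<Rightarrow> letter list \<Rightarrow> 'a vec" where
  "qsh q [] v = wd v"
| "qsh q u [] = wd u"
| "qsh q (a # u) (b # v) =
     (\<lambda>w. prep a (qsh q u (b # v)) w
        + prep b (qsh q (a # u) v) w * q powi (\<Sum>c\<leftarrow>a # u. bform c b))"

definition star :: "'a::field \<Rightarrow> 'a vec \<Rightarrow> 'a vec \<Rightarrow> 'a vec" where
  "star q f g = (\<lambda>w. \<Sum>u\<in>supp f. \<Sum>v\<in>supp g. f u * g v * qsh q u v w)"

definition qint :: "'a::field \<Rightarrow> int \<Rightarrow> 'a" where
  "qint q n = (q powi n - q powi (-n)) / (q - inverse q)"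

definition bar :: "letter \<Rightarrow> int" where
  "bar a = (if a = X then 1 else -1)"

definition catalan :: "letter list \<Rightarrow> bool" where
  "catalan w \<longleftrightarrow>
     (\<forall>i. 1 \<le> i \<and> i \<le> length w - 1 \<longrightarrow> (\<Sum>j<i. bar (w ! j)) \<ge> 0)
     \<and> (\<Sum>j<length w. bar (w ! j)) = 0"

definition Cat :: "'a::field \<Rightarrow> nat \<Rightarrow> 'a vec" where
  "Cat q n = (\<lambda>w. if catalan w \<and> length w = 2 * n
       then (\<Prod>i\<le>2 * n. qint q (1 + (\<Sum>j<i. bar (w ! j)))) else 0)"

end

theory Submission
  imports Defs
begin

definition ht :: "letter list \<Rightarrow> int" where
  "ht w = sum_list (map bar w)"

lemma ht_Nil[simp]: "ht [] = 0" and ht_Cons[simp]: "ht (a # w) = bar a + ht w"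
  by (simp_all add: ht_def)

definition D :: "letter \<Rightarrow> 'a::field vec \<Rightarrow> 'a vec" where
  "D a f = (\<lambda>w. f (a # w))"

lemma D_apply: "D a f w = f (a # w)" by (simp add: D_def)

lemma UNIV_letter: "(UNIV :: letter set) = {X, Y}"
  using letter.exhaust by auto

lemma finite_len_eq: "finite {w :: letter list. length w = n}"
proof -
  have "finite {xs :: letter list. set xs \<subseteq> UNIV \<and> length xs = n}"
    by (rule finite_lists_length_eq) (simp add: UNIV_letter)
  then show ?thesis by simp
qed

lemma bform_bar: "bform c b = 2 * bar c * bar b"
  by (cases c; cases b) (simp_all add: bform_def bar_def)

lemma sum_bform: "(\<Sum>c\<leftarrow>u. bform c b) = 2 * bar b * ht u"
  by (induction u) (simp_all add: bform_bar algebra_simps)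

lemma qsh_Nil_r: "qsh q u [] = wd u"
  by (cases u) simp_all

lemma qsh_at_Nil: "qsh q u v [] = (if u = [] \<and> v = [] then 1 else 0)"
  by (cases u; cases v) (simp_all add: wd_def prep_def)

lemma qsh_at_Cons:
  "qsh q u v (a # w) =
     (case u of [] \<Rightarrow> 0 | b # u' \<Rightarrow> if b = a then qsh q u' v w else 0)
   + (case v of [] \<Rightarrow> 0 | b # v' \<Rightarrow> if b = a then q powi (2 * bar a * ht u) * qsh q u v' w else 0)"
proof (cases u)
  case Nil
  then show ?thesis by (cases v) (auto simp: wd_def)
next
  case (Cons b u')
  show ?thesis
  proof (cases v)
    case Nil
    then show ?thesis using Cons by (auto simp: wd_def qsh_Nil_r)
  next
    case (Cons b' v')
    have e: "(\<Sum>c\<leftarrow>b#u'. bform c b') = 2 * bar b' * ht (b#u')" by (rule sum_bform)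
    show ?thesis unfolding \<open>u = b # u'\<close> \<open>v = b' # v'\<close> qsh.simps(3) e
      by (auto simp: prep_def)
  qed
qed

lemma qsh_nz: "qsh q u v w \<noteq> 0 \<Longrightarrow> length w = length u + length v \<and> ht w = ht u + ht v"
proof (induction w arbitrary: u v)
  case Nil
  then show ?case by (simp add: qsh_at_Nil split: if_splits)
next
  case (Cons a w)
  show ?case
  proof (cases "(case u of [] \<Rightarrow> 0 | b # u' \<Rightarrow> if b = a then qsh q u' v w else 0) \<noteq> 0")
    case True
    then obtain u' where "u = a # u'" "qsh q u' v w \<noteq> 0"
      by (cases u) (auto split: if_splits)
    with Cons.IH[of u' v] show ?thesis by simp
  next
    case False
    with Cons.prems have "(case v of [] \<Rightarrow> 0 | b # v' \<Rightarrow> if b = a then q powi (2 * bar a * ht u) * qsh q u v' w else 0) \<noteq> 0"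
      by (simp add: qsh_at_Cons)
    then obtain v' where "v = a # v'" "qsh q u v' w \<noteq> 0"
      by (cases v) (auto split: if_splits)
    with Cons.IH[of u v'] show ?thesis by simp
  qed
qed

definition fin :: "'a::field vec \<Rightarrow> bool" where "fin f \<longleftrightarrow> finite (supp f)"
definition hom :: "'a::field vec \<Rightarrow> int \<Rightarrow> bool" where "hom f d \<longleftrightarrow> (\<forall>w. f w \<noteq> 0 \<longrightarrow> ht w = d)"

lemma in_supp[simp]: "w \<in> supp f \<longleftrightarrow> f w \<noteq> 0" by (simp add: supp_def)

lemma star_eq:
  assumes "finite A" "supp f \<subseteq> A" "finite B" "supp g \<subseteq> B"
  shows "star q f g w = (\<Sum>u\<in>A. \<Sum>v\<in>B. f u * g v * qsh q u v w)"
proof -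
  have fA: "finite (supp f)" using assms finite_subset by blast
  have fB: "finite (supp g)" using assms finite_subset by blast
  have i: "(\<Sum>v\<in>supp g. f u * g v * qsh q u v w) = (\<Sum>v\<in>B. f u * g v * qsh q u v w)" for u
    by (rule sum.mono_neutral_left) (use assms in auto)
  have "star q f g w = (\<Sum>u\<in>supp f. \<Sum>v\<in>B. f u * g v * qsh q u v w)"
    unfolding star_def using i by simp
  also have "\<dots> = (\<Sum>u\<in>A. \<Sum>v\<in>B. f u * g v * qsh q u v w)"
    by (rule sum.mono_neutral_left) (use assms in auto)
  finally show ?thesis .
qed

lemma fin_D: "fin f \<Longrightarrow> fin (D a f)"
proof -
  assume "fin f"
  have "supp (D a f) = Cons a -` supp f" by (auto simp: supp_def D_apply)
  then show ?thesis using \<open>fin f\<close> unfolding fin_def by (simp add: finite_vimageI)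
qed

lemma hom_D: "hom f d \<Longrightarrow> hom (D a f) (d - bar a)"
  by (auto simp: hom_def D_apply)

lemma star_Nil:
  assumes "fin f" "fin g"
  shows "star q f g [] = f [] * g []"
proof -
  have "star q f g [] = (\<Sum>u\<in>insert [] (supp f). \<Sum>v\<in>insert [] (supp g). f u * g v * qsh q u v [])"
    by (rule star_eq) (use assms in \<open>auto simp: fin_def\<close>)
  also have "\<dots> = (\<Sum>u\<in>insert [] (supp f). if u = [] then f [] * g [] else 0)"
  proof (rule sum.cong[OF refl])
    fix u
    show "(\<Sum>v\<in>insert [] (supp g). f u * g v * qsh q u v []) = (if u = [] then f [] * g [] else 0)"
      using assms by (auto simp: qsh_at_Nil fin_def if_distrib cong: if_cong)
  qed
  also have "\<dots> = f [] * g []" using assms by (simp add: fin_def)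
  finally show ?thesis .
qed

lemma sum_case_Cons:
  assumes "finite A" "supp f \<subseteq> A"
  shows "(\<Sum>u\<in>A. f u * (case u of [] \<Rightarrow> 0 | b # u' \<Rightarrow> if b = a then H u' else 0))
       = (\<Sum>u'\<in>supp (D a f). D a f u' * H u')"
proof -
  let ?K = "\<lambda>u. f u * (case u of [] \<Rightarrow> 0 | b # u' \<Rightarrow> if b = a then H u' else 0)"
  have "(\<Sum>u'\<in>supp (D a f). D a f u' * H u') = (\<Sum>u'\<in>supp (D a f). ?K (a # u'))"
    by (simp add: D_apply)
  also have "\<dots> = (\<Sum>u\<in>Cons a ` supp (D a f). ?K u)"
    by (simp add: sum.reindex inj_on_def)
  also have "\<dots> = (\<Sum>u\<in>A. ?K u)"
  proof (rule sum.mono_neutral_left)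
    show "finite A" by fact
    show "Cons a ` supp (D a f) \<subseteq> A" using assms(2) by (auto simp: D_apply)
    show "\<forall>i\<in>A - Cons a ` supp (D a f). ?K i = 0"
    proof
      fix u assume u: "u \<in> A - Cons a ` supp (D a f)"
      show "?K u = 0"
      proof (cases u)
        case (Cons b u')
        then show ?thesis using u by (cases "b = a") (auto simp: image_iff D_apply)
      qed simp
    qed
  qed
  finally show ?thesis by simp
qed

lemma star_Cons:
  assumes ff: "fin f" and fg: "fin g" and hf: "hom f d"
  shows "star q f g (a # w) = star q (D a f) g w + q powi (2 * bar a * d) * star q f (D a g) w"
proof -
  let ?A1 = "\<lambda>u v. (case u of [] \<Rightarrow> 0 | b # u' \<Rightarrow> if b = a then qsh q u' v w else 0)"
  let ?A2 = "\<lambda>u v. (case v of [] \<Rightarrow> 0 | b # v' \<Rightarrow> if b = a then q powi (2 * bar a * ht u) * qsh q u v' w else 0)"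
  have FA: "finite (supp f)" and FB: "finite (supp g)" using ff fg by (auto simp: fin_def)
  have "star q f g (a # w) = (\<Sum>u\<in>supp f. \<Sum>v\<in>supp g. f u * g v * (?A1 u v + ?A2 u v))"
    unfolding star_def qsh_at_Cons ..
  also have "\<dots> = (\<Sum>u\<in>supp f. \<Sum>v\<in>supp g. f u * g v * ?A1 u v)
                 + (\<Sum>u\<in>supp f. \<Sum>v\<in>supp g. f u * g v * ?A2 u v)"
    by (simp add: distrib_left sum.distrib)
  also have "(\<Sum>u\<in>supp f. \<Sum>v\<in>supp g. f u * g v * ?A1 u v) = star q (D a f) g w"
  proof -
    have "(\<Sum>u\<in>supp f. \<Sum>v\<in>supp g. f u * g v * ?A1 u v)
        = (\<Sum>v\<in>supp g. g v * (\<Sum>u\<in>supp f. f u * ?A1 u v))"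
      by (subst sum.swap) (simp add: sum_distrib_left mult_ac)
    also have "\<dots> = (\<Sum>v\<in>supp g. g v * (\<Sum>u'\<in>supp (D a f). D a f u' * qsh q u' v w))"
    proof (rule sum.cong[OF refl])
      fix v
      have "(\<Sum>u\<in>supp f. f u * ?A1 u v) = (\<Sum>u'\<in>supp (D a f). D a f u' * qsh q u' v w)"
        using sum_case_Cons[OF FA subset_refl, of a "\<lambda>u'. qsh q u' v w"] by simp
      then show "g v * (\<Sum>u\<in>supp f. f u * ?A1 u v) = g v * (\<Sum>u'\<in>supp (D a f). D a f u' * qsh q u' v w)"
        by simp
    qed
    also have "\<dots> = star q (D a f) g w"
      unfolding star_def by (subst sum.swap) (simp add: sum_distrib_left mult_ac)
    finally show ?thesis .
  qed
  also have "(\<Sum>u\<in>supp f. \<Sum>v\<in>supp g. f u * g v * ?A2 u v) = q powi (2 * bar a * d) * star q f (D a g) w"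
  proof -
    have "(\<Sum>u\<in>supp f. \<Sum>v\<in>supp g. f u * g v * ?A2 u v)
        = (\<Sum>u\<in>supp f. q powi (2 * bar a * d) * (f u * (\<Sum>v'\<in>supp (D a g). D a g v' * qsh q u v' w)))"
    proof (rule sum.cong[OF refl])
      fix u assume u: "u \<in> supp f"
      then have htu: "ht u = d" using hf by (auto simp: hom_def)
      have e: "?A2 u v = q powi (2 * bar a * d) * (case v of [] \<Rightarrow> 0 | b # v' \<Rightarrow> if b = a then qsh q u v' w else 0)" for v
        by (cases v) (auto simp: htu)
      have s1: "(\<Sum>v\<in>supp g. g v * (case v of [] \<Rightarrow> 0 | b # v' \<Rightarrow> if b = a then qsh q u v' w else 0))
          = (\<Sum>v'\<in>supp (D a g). D a g v' * qsh q u v' w)"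
        by (rule sum_case_Cons[OF FB subset_refl])
      have s2: "(\<Sum>v\<in>supp g. f u * g v * ?A2 u v) = q powi (2 * bar a * d) * (f u * (\<Sum>v\<in>supp g. g v * (case v of [] \<Rightarrow> 0 | b # v' \<Rightarrow> if b = a then qsh q u v' w else 0)))"
        unfolding e by (simp add: sum_distrib_left mult_ac)
      show "(\<Sum>v\<in>supp g. f u * g v * ?A2 u v) = q powi (2 * bar a * d) * (f u * (\<Sum>v'\<in>supp (D a g). D a g v' * qsh q u v' w))"
        unfolding s2 s1 ..
    qed
    also have "\<dots> = q powi (2 * bar a * d) * star q f (D a g) w"
      unfolding star_def by (simp add: sum_distrib_left mult_ac)
    finally show ?thesis .
  qed
  finally show ?thesis .
qed

lemma fin_add[simp]: "fin f \<Longrightarrow> fin g \<Longrightarrow> fin (\<lambda>v. f v + g v)"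
  unfolding fin_def by (rule finite_subset[of _ "supp f \<union> supp g"]) (auto simp: supp_def)
lemma fin_diff[simp]: "fin f \<Longrightarrow> fin g \<Longrightarrow> fin (\<lambda>v. f v - g v)"
  unfolding fin_def by (rule finite_subset[of _ "supp f \<union> supp g"]) (auto simp: supp_def)
lemma fin_scale[simp]: "fin f \<Longrightarrow> fin (\<lambda>v. c * f v)"
  unfolding fin_def by (rule finite_subset[of _ "supp f"]) (auto simp: supp_def)
lemma fin_zero[simp]: "fin (\<lambda>v. 0)"
  unfolding fin_def supp_def by simp
lemma fin_wd[simp]: "fin (wd u)"
  unfolding fin_def supp_def wd_def by simp

lemma hom_add[simp]: "hom f d \<Longrightarrow> hom g d \<Longrightarrow> hom (\<lambda>v. f v + g v) d"
  unfolding hom_def by (metis add.right_neutral add_0)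
lemma hom_diff[simp]: "hom f d \<Longrightarrow> hom g d \<Longrightarrow> hom (\<lambda>v. f v - g v) d"
  unfolding hom_def by (metis cancel_comm_monoid_add_class.diff_cancel diff_zero)
lemma hom_scale[simp]: "hom f d \<Longrightarrow> hom (\<lambda>v. c * f v) d"
  unfolding hom_def by simp
lemma hom_zero[simp]: "hom (\<lambda>v. 0) d"
  unfolding hom_def by simp
lemma hom_wd: "hom (wd u) (ht u)"
  unfolding hom_def wd_def by simp

lemma star_add_l:
  assumes "fin f1" "fin f2" "fin g"
  shows "star q (\<lambda>v. f1 v + f2 v) g w = star q f1 g w + star q f2 g w"
proof -
  let ?A = "supp f1 \<union> supp f2"
  have fA: "finite ?A" and fB: "finite (supp g)" using assms by (auto simp: fin_def)
  have "star q (\<lambda>v. f1 v + f2 v) g w = (\<Sum>u\<in>?A. \<Sum>v\<in>supp g. (f1 u + f2 u) * g v * qsh q u v w)"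
    by (rule star_eq[OF fA _ fB]) (auto simp: supp_def)
  moreover have "star q f1 g w = (\<Sum>u\<in>?A. \<Sum>v\<in>supp g. f1 u * g v * qsh q u v w)"
    by (rule star_eq[OF fA _ fB]) auto
  moreover have "star q f2 g w = (\<Sum>u\<in>?A. \<Sum>v\<in>supp g. f2 u * g v * qsh q u v w)"
    by (rule star_eq[OF fA _ fB]) auto
  ultimately show ?thesis by (simp add: ring_distribs sum.distrib)
qed

lemma star_add_r:
  assumes "fin f" "fin g1" "fin g2"
  shows "star q f (\<lambda>v. g1 v + g2 v) w = star q f g1 w + star q f g2 w"
proof -
  let ?B = "supp g1 \<union> supp g2"
  have fB: "finite ?B" and fA: "finite (supp f)" using assms by (auto simp: fin_def)
  have "star q f (\<lambda>v. g1 v + g2 v) w = (\<Sum>u\<in>supp f. \<Sum>v\<in>?B. f u * (g1 v + g2 v) * qsh q u v w)"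
    by (rule star_eq[OF fA _ fB]) (auto simp: supp_def)
  moreover have "star q f g1 w = (\<Sum>u\<in>supp f. \<Sum>v\<in>?B. f u * g1 v * qsh q u v w)"
    by (rule star_eq[OF fA _ fB]) auto
  moreover have "star q f g2 w = (\<Sum>u\<in>supp f. \<Sum>v\<in>?B. f u * g2 v * qsh q u v w)"
    by (rule star_eq[OF fA _ fB]) auto
  ultimately show ?thesis by (simp add: ring_distribs sum.distrib)
qed

lemma star_diff_l:
  assumes "fin f1" "fin f2" "fin g"
  shows "star q (\<lambda>v. f1 v - f2 v) g w = star q f1 g w - star q f2 g w"
proof -
  let ?A = "supp f1 \<union> supp f2"
  have fA: "finite ?A" and fB: "finite (supp g)" using assms by (auto simp: fin_def)
  have "star q (\<lambda>v. f1 v - f2 v) g w = (\<Sum>u\<in>?A. \<Sum>v\<in>supp g. (f1 u - f2 u) * g v * qsh q u v w)"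
    by (rule star_eq[OF fA _ fB]) (auto simp: supp_def)
  moreover have "star q f1 g w = (\<Sum>u\<in>?A. \<Sum>v\<in>supp g. f1 u * g v * qsh q u v w)"
    by (rule star_eq[OF fA _ fB]) auto
  moreover have "star q f2 g w = (\<Sum>u\<in>?A. \<Sum>v\<in>supp g. f2 u * g v * qsh q u v w)"
    by (rule star_eq[OF fA _ fB]) auto
  ultimately show ?thesis by (simp add: ring_distribs sum_subtractf)
qed

lemma star_diff_r:
  assumes "fin f" "fin g1" "fin g2"
  shows "star q f (\<lambda>v. g1 v - g2 v) w = star q f g1 w - star q f g2 w"
proof -
  let ?B = "supp g1 \<union> supp g2"
  have fB: "finite ?B" and fA: "finite (supp f)" using assms by (auto simp: fin_def)
  have "star q f (\<lambda>v. g1 v - g2 v) w = (\<Sum>u\<in>supp f. \<Sum>v\<in>?B. f u * (g1 v - g2 v) * qsh q u v w)"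
    by (rule star_eq[OF fA _ fB]) (auto simp: supp_def)
  moreover have "star q f g1 w = (\<Sum>u\<in>supp f. \<Sum>v\<in>?B. f u * g1 v * qsh q u v w)"
    by (rule star_eq[OF fA _ fB]) auto
  moreover have "star q f g2 w = (\<Sum>u\<in>supp f. \<Sum>v\<in>?B. f u * g2 v * qsh q u v w)"
    by (rule star_eq[OF fA _ fB]) auto
  ultimately show ?thesis by (simp add: ring_distribs sum_subtractf)
qed

lemma star_scale_l:
  assumes "fin f" "fin g"
  shows "star q (\<lambda>v. c * f v) g w = c * star q f g w"
proof -
  have fA: "finite (supp f)" and fB: "finite (supp g)" using assms by (auto simp: fin_def)
  have "star q (\<lambda>v. c * f v) g w = (\<Sum>u\<in>supp f. \<Sum>v\<in>supp g. (c * f u) * g v * qsh q u v w)"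
    by (rule star_eq[OF fA _ fB]) (auto simp: supp_def)
  moreover have "star q f g w = (\<Sum>u\<in>supp f. \<Sum>v\<in>supp g. f u * g v * qsh q u v w)"
    by (rule star_eq[OF fA _ fB]) auto
  ultimately show ?thesis by (simp add: sum_distrib_left mult_ac)
qed

lemma star_scale_r:
  assumes "fin f" "fin g"
  shows "star q f (\<lambda>v. c * g v) w = c * star q f g w"
proof -
  have fA: "finite (supp f)" and fB: "finite (supp g)" using assms by (auto simp: fin_def)
  have "star q f (\<lambda>v. c * g v) w = (\<Sum>u\<in>supp f. \<Sum>v\<in>supp g. f u * (c * g v) * qsh q u v w)"
    by (rule star_eq[OF fA _ fB]) (auto simp: supp_def)
  moreover have "star q f g w = (\<Sum>u\<in>supp f. \<Sum>v\<in>supp g. f u * g v * qsh q u v w)"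
    by (rule star_eq[OF fA _ fB]) auto
  ultimately show ?thesis by (simp add: sum_distrib_left mult_ac)
qed

lemma star_zero_l[simp]: "star q (\<lambda>v. 0) g w = 0"
  by (simp add: star_def supp_def)
lemma star_zero_r[simp]: "star q f (\<lambda>v. 0) w = 0"
  by (simp add: star_def supp_def)

lemma supp_wd: "supp (wd u) = {u}" by (auto simp: supp_def wd_def)

lemma star_unit_l:
  assumes "fin g" shows "star q (wd []) g w = g w"
proof -
  have "star q (wd []) g w = (\<Sum>v\<in>supp g. g v * wd v w)"
    unfolding star_def supp_wd by (simp add: wd_def)
  also have "\<dots> = (\<Sum>v\<in>supp g. if v = w then g w else 0)"
    by (rule sum.cong) (auto simp: wd_def)
  also have "\<dots> = g w" using assms by (simp add: fin_def)
  finally show ?thesis .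
qed

lemma star_unit_r:
  assumes "fin f" shows "star q f (wd []) w = f w"
proof -
  have "star q f (wd []) w = (\<Sum>u\<in>supp f. f u * wd u w)"
    unfolding star_def supp_wd by (simp add: wd_def qsh_Nil_r)
  also have "\<dots> = (\<Sum>u\<in>supp f. if u = w then f w else 0)"
    by (rule sum.cong) (auto simp: wd_def)
  also have "\<dots> = f w" using assms by (simp add: fin_def)
  finally show ?thesis .
qed

lemma star_nz:
  assumes "star q f g w \<noteq> 0"
  shows "\<exists>u v. f u \<noteq> 0 \<and> g v \<noteq> 0 \<and> qsh q u v w \<noteq> 0"
proof (rule ccontr)
  assume "\<not> ?thesis"
  then have "\<And>u v. u \<in> supp f \<Longrightarrow> v \<in> supp g \<Longrightarrow> f u * g v * qsh q u v w = 0" by auto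
  then have "star q f g w = 0" unfolding star_def by (simp add: sum.neutral)
  with assms show False by simp
qed

lemma fin_star[simp]:
  assumes "fin f" "fin g" shows "fin (star q f g)"
proof -
  have "supp (star q f g) \<subseteq> (\<Union>u\<in>supp f. \<Union>v\<in>supp g. {w. length w = length u + length v})"
    using star_nz qsh_nz by (fastforce simp: supp_def)
  moreover have "finite (\<Union>u\<in>supp f. \<Union>v\<in>supp g. {w :: letter list. length w = length u + length v})"
    using assms by (auto simp: fin_def finite_len_eq)
  ultimately show ?thesis unfolding fin_def by (rule finite_subset)
qed

lemma hom_star:
  assumes "hom f d1" "hom g d2" shows "hom (star q f g) (d1 + d2)"
  unfolding hom_def
proof (intro allI impI)
  fix w assume "star q f g w \<noteq> 0"
  then obtain u v where "f u \<noteq> 0" "g v \<noteq> 0" "qsh q u v w \<noteq> 0" using star_nz by blast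
  then show "ht w = d1 + d2" using assms qsh_nz by (fastforce simp: hom_def)
qed

lemma star_assoc:
  assumes "q \<noteq> 0"
  shows "fin f \<Longrightarrow> fin g \<Longrightarrow> fin h \<Longrightarrow> hom f d1 \<Longrightarrow> hom g d2 \<Longrightarrow>
     star q (star q f g) h w = star q f (star q g h) w"
proof (induction w arbitrary: f g h d1 d2)
  case Nil
  then show ?case by (simp add: star_Nil)
next
  case (Cons a w)
  note fs = Cons.prems(1-3) fin_D[OF Cons.prems(1)] fin_D[OF Cons.prems(2)] fin_D[OF Cons.prems(3)]
  have Dfg: "D a (star q f g) = (\<lambda>v. star q (D a f) g v + q powi (2 * bar a * d1) * star q f (D a g) v)"
    using star_Cons[OF Cons.prems(1,2,4)] by (simp add: D_def)
  have Dgh: "D a (star q g h) = (\<lambda>v. star q (D a g) h v + q powi (2 * bar a * d2) * star q g (D a h) v)"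
    using star_Cons[OF Cons.prems(2,3,5)] by (simp add: D_def)
  have pw: "q powi (2 * bar a * (d1 + d2)) = q powi (2 * bar a * d1) * q powi (2 * bar a * d2)"
    using assms by (simp add: power_int_add[symmetric] algebra_simps)
  have "star q (star q f g) h (a # w) = star q (D a (star q f g)) h w
         + q powi (2 * bar a * (d1 + d2)) * star q (star q f g) (D a h) w"
    by (rule star_Cons) (use fs Cons.prems hom_star in auto)
  also have "q powi (2 * bar a * (d1 + d2)) = q powi (2 * bar a * d1) * q powi (2 * bar a * d2)" by (rule pw)
  also have "star q (D a (star q f g)) h w = star q (star q (D a f) g) h w
        + q powi (2 * bar a * d1) * star q (star q f (D a g)) h w"
    unfolding Dfg by (subst star_add_l) (simp_all add: fs star_scale_l)
  also have "star q (star q (D a f) g) h w = star q (D a f) (star q g h) w"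
    by (rule Cons.IH[of "D a f" g h "d1 - bar a" d2]) (use fs Cons.prems hom_D[OF Cons.prems(4)] in blast)+
  also have "star q (star q f (D a g)) h w = star q f (star q (D a g) h) w"
    by (rule Cons.IH[of f "D a g" h d1 "d2 - bar a"]) (use fs Cons.prems hom_D[OF Cons.prems(5)] in blast)+
  also have "star q (star q f g) (D a h) w = star q f (star q g (D a h)) w"
    by (rule Cons.IH[of f g "D a h" d1 d2]) (use fs Cons.prems in blast)+
  also have "star q f (star q g h) (a # w) = star q (D a f) (star q g h) w
        + q powi (2 * bar a * d1) * star q f (D a (star q g h)) w"
    by (rule star_Cons) (use fs Cons.prems in auto)
  moreover have "star q f (D a (star q g h)) w = star q f (star q (D a g) h) w
        + q powi (2 * bar a * d2) * star q f (star q g (D a h)) w"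
    unfolding Dgh by (subst star_add_r) (simp_all add: fs star_scale_r)
  ultimately show ?case by (simp add: algebra_simps)
qed

lemma bar_X[simp]: "bar X = 1" and bar_Y[simp]: "bar Y = -1" by (simp_all add: bar_def)

fun T :: "'a::field \<Rightarrow> int \<Rightarrow> int \<Rightarrow> int \<Rightarrow> nat \<Rightarrow> letter list \<Rightarrow> 'a" where
  "T q s h m 0 [] = (if h = m then 1 else 0)"
| "T q s h m (Suc r) (a # w) = qint q (h + s) * T q s (h + bar a) m r w"
| "T q s h m 0 (a # w) = 0"
| "T q s h m (Suc r) [] = 0"

lemma T_0: "T q s h m 0 w = (if w = [] \<and> h = m then 1 else 0)"
  by (cases w) simp_all

lemma T_nz: "T q s h m r w \<noteq> 0 \<Longrightarrow> length w = r \<and> ht w = m - h"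
proof (induction w arbitrary: h r)
  case Nil then show ?case by (cases r) (auto split: if_splits)
next
  case (Cons a w) then show ?case by (cases r) (fastforce)+
qed

lemma fin_T[simp]: "fin (T q s h m r)"
proof -
  have "supp (T q s h m r) \<subseteq> {w. length w = r}" by (auto simp: supp_def dest: T_nz)
  then show ?thesis unfolding fin_def using finite_len_eq finite_subset by blast
qed

lemma hom_T: "hom (T q s h m r) (m - h)"
  using T_nz unfolding hom_def by blast

lemma D_T0: "D a (T q s h m 0) = (\<lambda>v. 0)"
  by (simp add: D_def)
lemma D_TS: "D a (T q s h m (Suc r)) = (\<lambda>v. qint q (h + s) * T q s (h + bar a) m r v)"
  by (simp add: D_def)

lemma T_shift: "T q s (h + 1) (m + 1) r w = T q (s + 1) h m r w"
proof (induction w arbitrary: h r)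
  case Nil then show ?case by (cases r) simp_all
next
  case (Cons a w)
  show ?case
  proof (cases r)
    case (Suc r')
    have e1: "h + 1 + bar a = (h + bar a) + 1" and e2: "h + 1 + s = h + (s + 1)" by simp_all
    show ?thesis unfolding Suc T.simps e1 e2 Cons.IH ..
  qed simp
qed

lemma qint_0[simp]: "qint q 0 = 0" by (simp add: qint_def)

lemma T1_low: "h \<ge> -1 \<Longrightarrow> m \<le> -2 \<Longrightarrow> T q 1 h m r w = 0"
proof (induction w arbitrary: h r)
  case Nil then show ?case by (cases r) simp_all
next
  case (Cons a w)
  show ?case
  proof (cases r)
    case (Suc r')
    show ?thesis
    proof (cases "h = -1")
      case True then show ?thesis using Suc by simp
    next
      case False
      then have "h + bar a \<ge> -1" using Cons.prems by (cases a) auto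
      then show ?thesis using Suc Cons by simp
    qed
  qed simp
qed

lemma T_snoc: "T q s h m (Suc r) (w @ [a]) = T q s h (m - bar a) r w * qint q (m - bar a + s)"
proof (induction w arbitrary: h r)
  case Nil
  show ?case
  proof (cases r)
    case 0
    have "(h + bar a = m) = (h = m - bar a)" by auto
    then show ?thesis using 0 by (auto simp: algebra_simps)
  qed simp
next
  case (Cons b w)
  show ?case
  proof (cases r)
    case 0 then show ?thesis by (cases w) simp_all
  next
    case (Suc r') then show ?thesis using Cons by simp
  qed
qed

lemma D_wd_Cons: "D a (wd (b # u)) = (if a = b then wd u else (\<lambda>v. 0))"
  by (auto simp: D_def wd_def)
lemma D_wd_Nil: "D a (wd []) = (\<lambda>v. 0)"
  by (auto simp: D_def wd_def)
lemma wd_Nil_Cons[simp]: "wd [] (a # w) = 0" by (simp add: wd_def)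
lemma wd_Cons_Nil[simp]: "wd (a # u) [] = 0" by (simp add: wd_def)

lemma hom_x: "hom (wd [X]) 1" using hom_wd[of "[X]"] by simp
lemma hom_y: "hom (wd [Y]) (-1)" using hom_wd[of "[Y]"] by simp

lemma pw2m: "(q::'a::field) \<noteq> 0 \<Longrightarrow> q powi (2 * d) = q powi d * q powi d"
  unfolding mult_2 by (rule power_int_add) simp

lemma zrel_lem: fixes q :: "'a::field" assumes q: "q \<noteq> 0" and tt: "q powi h = t" and uu: "q powi m = u"
 shows "q powi (2 * (m - h)) * t^2 = u^2"
proof -
  have "q powi (m - h) = u / t" using q tt uu by (simp add: power_int_diff)
  moreover have "t \<noteq> 0" using q tt by auto
  ultimately show ?thesis using pw2m[OF q, of "m - h"] by (simp add: power2_eq_square)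
qed

lemma qint_mul:
  fixes q :: "'a::field"
  assumes c: "q - inverse q \<noteq> 0"
  shows "(q - inverse q) * qint q n = q powi n - inverse (q powi n)"
  using c by (simp add: qint_def power_int_minus)

lemma qdiff:
  fixes q :: "'a::field"
  assumes q: "q \<noteq> 0" and c: "q - inverse q \<noteq> 0"
  shows "qint q (n+1) - qint q (n-1) = q powi n + inverse (q powi n)"
proof -
  obtain s where ss: "q powi n = s" by blast
  have s: "s \<noteq> 0" using q ss by auto
  have p1: "q powi (n+1) = s * q" using q ss by (simp add: power_int_add)
  have p2: "q powi (n-1) = s * inverse q" using q ss by (simp add: power_int_diff field_simps)
  have "(q - inverse q) * (qint q (n+1) - qint q (n-1)) = (s*q - inverse (s*q)) - (s * inverse q - inverse (s * inverse q))"
    by (simp add: right_diff_distrib qint_mul[OF c] p1 p2)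
  also have "\<dots> = (q - inverse q) * (s + inverse s)"
    using q s by (simp add: algebra_simps)
  finally show ?thesis using c ss by simp
qed

lemma CI:
  fixes q :: "'a::field_char_0"
  assumes q: "q \<noteq> 0" and c: "q*q - 1 \<noteq> 0"
  shows "q^4 * (q powi h)^4 - 1 = (q - inverse q) * q^2 * (q powi h)^2 * qint q (h+1) * (qint q (h+2) - qint q h)"
proof -
  obtain t where tt: "q powi h = t" by blast
  have t: "t \<noteq> 0" using q tt by auto
  have c': "q - inverse q \<noteq> 0" using q c by (simp add: field_simps)
  have e1: "(q - inverse q) * qint q (h+1) = t*q - inverse (t*q)"
    using qint_mul[OF c', of "h+1"] q tt by (simp add: power_int_add)
  have e2: "qint q (h+2) - qint q h = t*q + inverse (t*q)"
    using qdiff[OF q c', of "h+1"] q tt by (simp add: power_int_add add.assoc)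
  have i: "inverse (t*q) * (t*q) = 1" using t q by (simp add: field_simps)
  show ?thesis unfolding tt using e1 e2 i by algebra
qed

lemma VL:
  fixes q :: "'a::field_char_0"
  assumes q: "q \<noteq> 0" and c: "q*q - 1 \<noteq> 0"
  shows "q^4 * (q powi m)^2 * (q powi h)^2 * star q (wd [X]) (T q 1 h m r) w - star q (T q 1 h m r) (wd [X]) w
       = (q - inverse q) * q^2 * (q powi m)^2 *
         (qint q (m+2) * T q 1 h (m+1) (Suc r) w - qint q (h+1) * T q 0 h (m+1) (Suc r) w)"
proof (induction w arbitrary: h r)
  case Nil
  then show ?case by (simp add: star_Nil)
next
  case (Cons a w)
  obtain t where tt: "q powi h = t" by blast
  obtain u where uu: "q powi m = u" by blast
  define z where "z = q powi (2 * (m - h))"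
  have zrel: "z * t^2 = u^2" unfolding z_def by (rule zrel_lem[OF q tt uu])
  have ci: "q^4 * t^4 - 1 = (q - inverse q) * q^2 * t^2 * qint q (h+1) * (qint q (h+2) - qint q h)"
    using CI[OF q c, of h] tt by simp
  let ?F = "T q 1 h m r"
  have SX: "star q (wd [X]) ?F (a # w) = star q (D a (wd [X])) ?F w + q powi (2 * bar a * 1) * star q (wd [X]) (D a ?F) w"
    by (rule star_Cons) (simp_all add: hom_x)
  have FX: "star q ?F (wd [X]) (a # w) = star q (D a ?F) (wd [X]) w + q powi (2 * bar a * (m - h)) * star q ?F (D a (wd [X])) w"
    by (rule star_Cons) (simp_all add: hom_T)
  show ?case
  proof (cases a)
    case X
    note aX = X
    show ?thesis
    proof (cases r)
      case 0
      have e1: "star q (wd [X]) ?F (a # w) = ?F w" using SX by (simp add: aX D_wd_Cons star_unit_l 0 D_T0)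
      have e2: "star q ?F (wd [X]) (a # w) = z * ?F w" using FX by (simp add: aX D_wd_Cons star_unit_r 0 D_T0 z_def)
      show ?thesis
      proof (cases "w = [] \<and> h = m")
        case True
        then have hm: "h = m" and w: "w = []" by auto
        have z1: "z = 1" unfolding z_def hm by simp
        have "q^4 * u^2 * t^2 * 1 - z * 1 = (q - inverse q) * q^2 * u^2 * (qint q (m+2) * qint q (h+1) - qint q (h+1) * qint q h)"
          using ci z1 hm tt uu by (simp add: algebra_simps power4_eq_xxxx power2_eq_square)
        moreover have "t = u" using tt uu hm by simp
        ultimately show ?thesis using e1 e2 by (simp add: aX 0 w hm tt uu)
      next
        case False
        then show ?thesis unfolding e1 e2 by (auto simp: aX 0 T_0)
      qed
    next
      case (Suc r')
      let ?T' = "T q 1 (h+1) m r'"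
      define Sx where "Sx = star q (wd [X]) ?T' w"
      define P where "P = star q ?T' (wd [X]) w"
      define A where "A = T q 1 (h+1) (m+1) (Suc r') w"
      define B where "B = T q 0 (h+1) (m+1) (Suc r') w"
      have e1: "star q (wd [X]) ?F (a # w) = B + q^2 * (qint q (h+1) * Sx)"
        using SX T_shift[of q 0 h m "Suc r'" w] by (simp add: aX D_wd_Cons star_unit_l Suc D_TS star_scale_r Sx_def B_def)
      have e2: "star q ?F (wd [X]) (a # w) = qint q (h+1) * P + z * B"
        using FX T_shift[of q 0 h m "Suc r'" w] by (simp add: aX D_wd_Cons star_unit_r Suc D_TS star_scale_l z_def P_def B_def)
      have IH: "q^4 * u^2 * (t*q)^2 * Sx - P = (q - inverse q) * q^2 * u^2 * (qint q (m+2) * A - qint q (h+2) * B)"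
        using Cons.IH[of "h+1" r'] q by (simp add: power_int_add tt uu Sx_def P_def A_def B_def add.assoc)
      have R1: "T q 1 h (m+1) (Suc r) (a # w) = qint q (h+1) * A" by (simp add: aX Suc A_def)
      have R2: "T q 0 h (m+1) (Suc r) (a # w) = qint q h * B" by (simp add: aX Suc B_def)
      have "q^4 * u^2 * t^2 * (B + q^2 * (qint q (h+1) * Sx)) - (qint q (h+1) * P + z * B)
          = (q - inverse q) * q^2 * u^2 * (qint q (m+2) * (qint q (h+1) * A) - qint q (h+1) * (qint q h * B))"
        using IH ci zrel by algebra
      then show ?thesis unfolding e1 e2 R1 R2 tt uu .
    qed
  next
    case Y
    note aY = Y
    show ?thesis
    proof (cases r)
      case 0
      have e1: "star q (wd [X]) ?F (a # w) = 0" using SX by (simp add: aY D_wd_Cons 0 D_T0)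
      have e2: "star q ?F (wd [X]) (a # w) = 0" using FX by (simp add: aY D_wd_Cons 0 D_T0)
      show ?thesis
      proof (cases "w = [] \<and> h = m + 2")
        case True
        then show ?thesis unfolding e1 e2 by (simp add: aY 0)
      next
        case False
        then show ?thesis unfolding e1 e2 by (auto simp: aY 0 T_0)
      qed
    next
      case (Suc r')
      let ?T' = "T q 1 (h-1) m r'"
      define Sx where "Sx = star q (wd [X]) ?T' w"
      define P where "P = star q ?T' (wd [X]) w"
      define A where "A = T q 1 (h-1) (m+1) (Suc r') w"
      define B where "B = T q 0 (h-1) (m+1) (Suc r') w"
      define qi where "qi = inverse (q^2)"
      have qi: "qi * q^2 = 1" using q unfolding qi_def by simp
      have e1: "star q (wd [X]) ?F (a # w) = qi * (qint q (h+1) * Sx)"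
        using SX by (simp add: aY D_wd_Cons Suc D_TS star_scale_r power_int_minus qi_def Sx_def)
      have e2: "star q ?F (wd [X]) (a # w) = qint q (h+1) * P"
        using FX by (simp add: aY D_wd_Cons Suc D_TS star_scale_l P_def)
      have tq: "q powi (h - 1) * q = t" using q tt by (simp add: power_int_diff)
      have IH0: "q^4 * u^2 * (q powi (h - 1))^2 * Sx - P = (q - inverse q) * q^2 * u^2 * (qint q (m+2) * A - qint q h * B)"
        using Cons.IH[of "h-1" r'] q by (simp add: uu Sx_def P_def A_def B_def)
      have R1: "T q 1 h (m+1) (Suc r) (a # w) = qint q (h+1) * A" by (simp add: aY Suc A_def)
      have R2: "T q 0 h (m+1) (Suc r) (a # w) = qint q h * B" by (simp add: aY Suc B_def)
      have "q^4 * u^2 * t^2 * (qi * (qint q (h+1) * Sx)) - qint q (h+1) * P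
          = (q - inverse q) * q^2 * u^2 * (qint q (m+2) * (qint q (h+1) * A) - qint q (h+1) * (qint q h * B))"
        using IH0 tq qi by algebra
      then show ?thesis unfolding e1 e2 R1 R2 tt uu .
    qed
  qed
qed

lemma UL:
  fixes q :: "'a::field_char_0"
  assumes q: "q \<noteq> 0" and c: "q*q - 1 \<noteq> 0"
  shows "q^4 * (q powi m)^2 * (q powi h)^2 * star q (T q 1 h m r) (wd [Y]) w - star q (wd [Y]) (T q 1 h m r) w
       = (q - inverse q) * q^2 * (q powi h)^2 *
         (qint q (h+1) * T q 2 h (m-1) (Suc r) w - qint q m * T q 1 h (m-1) (Suc r) w)"
proof (induction w arbitrary: h r)
  case Nil
  then show ?case by (simp add: star_Nil)
next
  case (Cons a w)
  obtain t where tt: "q powi h = t" by blast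
  obtain u where uu: "q powi m = u" by blast
  define z where "z = q powi (2 * (h - m))"
  have zrel: "z * u^2 = t^2" unfolding z_def by (rule zrel_lem[OF q uu tt])
  have ci: "q^4 * t^4 - 1 = (q - inverse q) * q^2 * t^2 * qint q (h+1) * (qint q (h+2) - qint q h)"
    using CI[OF q c, of h] tt by simp
  define qi where "qi = inverse (q^2)"
  have qi: "qi * q^2 = 1" using q unfolding qi_def by simp
  let ?F = "T q 1 h m r"
  have SY: "star q ?F (wd [Y]) (a # w) = star q (D a ?F) (wd [Y]) w + q powi (2 * bar a * (m - h)) * star q ?F (D a (wd [Y])) w"
    by (rule star_Cons) (simp_all add: hom_T)
  have YS: "star q (wd [Y]) ?F (a # w) = star q (D a (wd [Y])) ?F w + q powi (2 * bar a * (-1)) * star q (wd [Y]) (D a ?F) w"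
    by (rule star_Cons) (simp_all add: hom_y)
  show ?case
  proof (cases a)
    case X
    note aX = X
    show ?thesis
    proof (cases r)
      case 0
      have e1: "star q ?F (wd [Y]) (a # w) = 0" using SY by (simp add: aX D_wd_Cons 0 D_T0)
      have e2: "star q (wd [Y]) ?F (a # w) = 0" using YS by (simp add: aX D_wd_Cons 0 D_T0)
      show ?thesis
      proof (cases "w = [] \<and> h + 2 = m")
        case True
        then have "m = h + 2" by simp
        then show ?thesis unfolding e1 e2 using True by (simp add: aX 0)
      next
        case False
        then show ?thesis unfolding e1 e2 by (auto simp: aX 0 T_0)
      qed
    next
      case (Suc r')
      let ?T' = "T q 1 (h+1) m r'"
      define Sfy where "Sfy = star q ?T' (wd [Y]) w"
      define Syf where "Syf = star q (wd [Y]) ?T' w"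
      define A where "A = T q 2 (h+1) (m-1) (Suc r') w"
      define B where "B = T q 1 (h+1) (m-1) (Suc r') w"
      have e1: "star q ?F (wd [Y]) (a # w) = qint q (h+1) * Sfy"
        using SY by (simp add: aX D_wd_Cons Suc D_TS star_scale_l Sfy_def)
      have e2: "star q (wd [Y]) ?F (a # w) = qi * (qint q (h+1) * Syf)"
        using YS by (simp add: aX D_wd_Cons Suc D_TS star_scale_r power_int_minus qi_def Syf_def)
      have IH: "q^4 * u^2 * (t*q)^2 * Sfy - Syf = (q - inverse q) * q^2 * (t*q)^2 * (qint q (h+2) * A - qint q m * B)"
        using Cons.IH[of "h+1" r'] q by (simp add: power_int_add tt uu Sfy_def Syf_def A_def B_def add.assoc)
      have R1: "T q 2 h (m-1) (Suc r) (a # w) = qint q (h+2) * A" by (simp add: aX Suc A_def)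
      have R2: "T q 1 h (m-1) (Suc r) (a # w) = qint q (h+1) * B" by (simp add: aX Suc B_def)
      have "q^4 * u^2 * t^2 * (qint q (h+1) * Sfy) - qi * (qint q (h+1) * Syf)
          = (q - inverse q) * q^2 * t^2 * (qint q (h+1) * (qint q (h+2) * A) - qint q m * (qint q (h+1) * B))"
        using IH qi by algebra
      then show ?thesis unfolding e1 e2 R1 R2 tt uu .
    qed
  next
    case Y
    note aY = Y
    have pz: "q powi (2 * bar a * (m - h)) = z" unfolding z_def aY by (simp add: algebra_simps)
    show ?thesis
    proof (cases r)
      case 0
      have e1: "star q ?F (wd [Y]) (a # w) = z * ?F w" using SY unfolding pz by (simp add: aY D_wd_Cons 0 D_T0 star_unit_r)
      have e2: "star q (wd [Y]) ?F (a # w) = ?F w" using YS by (simp add: aY D_wd_Cons 0 D_T0 star_unit_l)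
      show ?thesis
      proof (cases "w = [] \<and> h = m")
        case True
        then have hm: "h = m" and w: "w = []" by auto
        have z1: "z = 1" unfolding z_def hm by simp
        have tu: "t = u" using tt uu hm by simp
        have "q^4 * u^2 * t^2 * (z * 1) - 1 = (q - inverse q) * q^2 * t^2 * (qint q (h+1) * qint q (h+2) - qint q m * qint q (h+1))"
          using ci z1 hm tu by (simp add: algebra_simps power4_eq_xxxx power2_eq_square)
        then show ?thesis unfolding e1 e2 by (simp add: aY 0 w hm tt uu tu)
      next
        case False
        then show ?thesis unfolding e1 e2 by (auto simp: aY 0 T_0)
      qed
    next
      case (Suc r')
      let ?T' = "T q 1 (h-1) m r'"
      define Sfy where "Sfy = star q ?T' (wd [Y]) w"
      define Syf where "Syf = star q (wd [Y]) ?T' w"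
      define A where "A = T q 2 (h-1) (m-1) (Suc r') w"
      define B where "B = T q 1 (h-1) (m-1) (Suc r') w"
      have Fw: "?F w = A" using T_shift[of q 1 "h-1" "m-1" "Suc r'" w] Suc by (simp add: A_def)
      have e1: "star q ?F (wd [Y]) (a # w) = qint q (h+1) * Sfy + z * A"
        using SY Fw unfolding pz by (simp add: aY D_wd_Cons Suc D_TS star_scale_l star_unit_r Sfy_def)
      have e2: "star q (wd [Y]) ?F (a # w) = A + q^2 * (qint q (h+1) * Syf)"
        using YS Fw by (simp add: aY D_wd_Cons Suc D_TS star_scale_r star_unit_l Syf_def)
      have tq: "q powi (h - 1) * q = t" using q tt by (simp add: power_int_diff)
      have IH0: "q^4 * u^2 * (q powi (h - 1))^2 * Sfy - Syf = (q - inverse q) * q^2 * (q powi (h - 1))^2 * (qint q h * A - qint q m * B)"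
        using Cons.IH[of "h-1" r'] q by (simp add: uu Sfy_def Syf_def A_def B_def)
      have R1: "T q 2 h (m-1) (Suc r) (a # w) = qint q (h+2) * A" by (simp add: aY Suc A_def)
      have R2: "T q 1 h (m-1) (Suc r) (a # w) = qint q (h+1) * B" by (simp add: aY Suc B_def)
      have "q^4 * u^2 * t^2 * (qint q (h+1) * Sfy + z * A) - (A + q^2 * (qint q (h+1) * Syf))
          = (q - inverse q) * q^2 * t^2 * (qint q (h+1) * (qint q (h+2) * A) - qint q m * (qint q (h+1) * B))"
        using IH0 tq zrel ci by algebra
      then show ?thesis unfolding e1 e2 R1 R2 tt uu .
    qed
  qed
qed

definition Px :: "'a::field vec \<Rightarrow> 'a vec" where
  "Px F = (\<lambda>w. case w of [] \<Rightarrow> 0 | a # v \<Rightarrow> if a = X then F v else 0)"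

lemma Px_Nil[simp]: "Px F [] = 0" and Px_X[simp]: "Px F (X # v) = F v" and Px_Y[simp]: "Px F (Y # v) = 0"
  by (simp_all add: Px_def)

lemma D_Px_X: "D X (Px F) = F" by (simp add: D_def)
lemma D_Px_Y: "D Y (Px F) = (\<lambda>v. 0)" by (simp add: D_def)

lemma fin_Px[simp]: "fin F \<Longrightarrow> fin (Px F)"
proof -
  assume "fin F"
  have "supp (Px F) \<subseteq> Cons X ` supp F"
  proof
    fix w assume "w \<in> supp (Px F)"
    then show "w \<in> Cons X ` supp F"
      by (cases w) (auto simp: Px_def supp_def split: if_splits)
  qed
  then show ?thesis using \<open>fin F\<close> unfolding fin_def using finite_subset by blast
qed

lemma hom_Px: "hom F d \<Longrightarrow> hom (Px F) (d + 1)"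
  unfolding hom_def Px_def by (auto split: list.splits if_splits)

lemma x_Px: "wd [X] = Px (wd [])" by (auto simp: Px_def wd_def split: list.splits)
lemma xy_Px: "wd [X, Y] = Px (wd [Y])" by (auto simp: Px_def wd_def split: list.splits)

lemma qint1: "(q::'a::field) - inverse q \<noteq> 0 \<Longrightarrow> qint q 1 = 1"
  by (simp add: qint_def power_int_minus)

lemma T_start0: "T q 0 0 m (Suc r) w = 0" by (cases w) simp_all
lemma T_start_m1: "T q 1 (-1) m (Suc r) w = 0" by (cases w) simp_all

definition Cn :: "'a::field \<Rightarrow> nat \<Rightarrow> 'a vec" where "Cn q n = T q 1 0 0 (2 * n)"
definition Yn :: "'a::field \<Rightarrow> nat \<Rightarrow> 'a vec" where "Yn q n = T q 1 0 (-1) (2 * n + 1)"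
definition Xn :: "'a::field \<Rightarrow> nat \<Rightarrow> 'a vec" where "Xn q n = Px (Cn q n)"
definition Gn :: "'a::field \<Rightarrow> nat \<Rightarrow> 'a vec" where "Gn q n = Px (Yn q n)"

lemma fin_els[simp]: "fin (Cn q n)" "fin (Yn q n)" "fin (Xn q n)" "fin (Gn q n)"
  by (simp_all add: Cn_def Yn_def Xn_def Gn_def)

lemma hom_els: "hom (Cn q n) 0" "hom (Yn q n) (-1)" "hom (Xn q n) 1" "hom (Gn q n) 0"
  using hom_T[of q 1 0 0 "2*n"] hom_T[of q 1 0 "-1" "2*n+1"]
    hom_Px[OF hom_T[of q 1 0 0 "2*n"]] hom_Px[OF hom_T[of q 1 0 "-1" "2*n+1"]]
  by (simp_all add: Cn_def Yn_def Xn_def Gn_def)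

lemma hom_xy: "hom (wd [X, Y]) 0" using hom_wd[of "[X,Y]"] by simp

lemma Yn0: "(q::'a::field) - inverse q \<noteq> 0 \<Longrightarrow> Yn q 0 = wd [Y]"
proof -
  assume c: "q - inverse q \<noteq> 0"
  show ?thesis
  proof
    fix w show "Yn q 0 w = wd [Y] w"
    proof (cases w)
      case (Cons a v) then show ?thesis
        by (cases v; cases a) (simp_all add: Yn_def wd_def qint1[OF c] T_0)
    qed (simp add: Yn_def wd_def)
  qed
qed

lemma Xn0: "Xn q 0 = wd [X]"
proof -
  have "Cn q 0 = wd []" by (auto simp: Cn_def wd_def T_0)
  then show ?thesis by (simp add: Xn_def x_Px)
qed

lemma Gn0: "(q::'a::field) - inverse q \<noteq> 0 \<Longrightarrow> Gn q 0 = wd [X, Y]"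
  by (simp add: Gn_def Yn0 xy_Px)

context
  fixes q :: "'a::field_char_0"
  assumes q: "q \<noteq> 0" and c: "q*q - 1 \<noteq> 0"
begin

lemma c': "q - inverse q \<noteq> 0" using q c by (simp add: field_simps)

lemma id_i: "star q (wd [X]) (Gn q k) w - star q (Gn q k) (wd [X]) w = (q - inverse q) * Xn q (k+1) w"
proof (cases w)
  case Nil then show ?thesis by (simp add: star_Nil Xn_def)
next
  case (Cons a v)
  have S1: "star q (wd [X]) (Gn q k) (a # v) = star q (D a (wd [X])) (Gn q k) v + q powi (2 * bar a * 1) * star q (wd [X]) (D a (Gn q k)) v"
    by (rule star_Cons) (simp_all add: hom_x)
  have S2: "star q (Gn q k) (wd [X]) (a # v) = star q (D a (Gn q k)) (wd [X]) v + q powi (2 * bar a * 0) * star q (Gn q k) (D a (wd [X])) v"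
    by (rule star_Cons) (simp_all add: hom_els)
  show ?thesis
  proof (cases a)
    case X
    have vl: "q^4 * (q powi (-1))^2 * (q powi 0)^2 * star q (wd [X]) (T q 1 0 (-1) (2*k+1)) v - star q (T q 1 0 (-1) (2*k+1)) (wd [X]) v
       = (q - inverse q) * q^2 * (q powi (-1))^2 *
         (qint q (-1+2) * T q 1 0 (-1+1) (Suc (2*k+1)) v - qint q (0+1) * T q 0 0 (-1+1) (Suc (2*k+1)) v)"
      by (rule VL[OF q c])
    have k1: "q^4 * (q powi (-1))^2 * (q powi 0)^2 = q^2" using q by (simp add: power_int_minus field_simps)
    have k2: "(q - inverse q) * q^2 * (q powi (-1))^2 = q - inverse q" using q by (simp add: power_int_minus field_simps)
    have vl2: "q^2 * star q (wd [X]) (Yn q k) v - star q (Yn q k) (wd [X]) v = (q - inverse q) * Cn q (k+1) v"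
      using vl unfolding k1 k2 by (simp add: Yn_def Cn_def T_start0 qint1[OF c'])
    have "star q (wd [X]) (Gn q k) (a # v) = Gn q k v + q^2 * star q (wd [X]) (Yn q k) v"
      using S1 by (simp add: X D_wd_Cons star_unit_l Gn_def D_Px_X)
    moreover have "star q (Gn q k) (wd [X]) (a # v) = star q (Yn q k) (wd [X]) v + Gn q k v"
      using S2 by (simp add: X D_wd_Cons star_unit_r Gn_def D_Px_X)
    ultimately show ?thesis using vl2 by (simp add: Cons X Xn_def)
  next
    case Y
    have "star q (wd [X]) (Gn q k) (a # v) = 0"
      using S1 by (simp add: Y D_wd_Cons Gn_def D_Px_Y)
    moreover have "star q (Gn q k) (wd [X]) (a # v) = 0"
      using S2 by (simp add: Y D_wd_Cons Gn_def D_Px_Y)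
    ultimately show ?thesis by (simp add: Cons Y Xn_def)
  qed
qed

lemma id_i': "star q (Gn q k) (wd [Y]) w - star q (wd [Y]) (Gn q k) w = (q - inverse q) * Yn q (k+1) w"
proof (cases w)
  case Nil then show ?thesis by (simp add: star_Nil Yn_def Gn_def)
next
  case (Cons a v)
  have S1: "star q (Gn q k) (wd [Y]) (a # v) = star q (D a (Gn q k)) (wd [Y]) v + q powi (2 * bar a * 0) * star q (Gn q k) (D a (wd [Y])) v"
    by (rule star_Cons) (simp_all add: hom_els)
  have S2: "star q (wd [Y]) (Gn q k) (a # v) = star q (D a (wd [Y])) (Gn q k) v + q powi (2 * bar a * (-1)) * star q (wd [Y]) (D a (Gn q k)) v"
    by (rule star_Cons) (simp_all add: hom_y)
  show ?thesis
  proof (cases a)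
    case X
    have ul: "q^4 * (q powi (-1))^2 * (q powi 0)^2 * star q (T q 1 0 (-1) (2*k+1)) (wd [Y]) v - star q (wd [Y]) (T q 1 0 (-1) (2*k+1)) v
       = (q - inverse q) * q^2 * (q powi 0)^2 *
         (qint q (0+1) * T q 2 0 (-1-1) (Suc (2*k+1)) v - qint q (-1) * T q 1 0 (-1-1) (Suc (2*k+1)) v)"
      by (rule UL[OF q c])
    have sh: "T q 2 0 (-2) (Suc (2*k+1)) v = T q 1 1 (-1) (Suc (2*k+1)) v"
      using T_shift[of q 1 0 "-2" "Suc (2*k+1)" v] by simp
    have k1: "q^4 * (q powi (-1))^2 * (q powi 0)^2 = q^2" using q by (simp add: power_int_minus field_simps)
    have ul2: "q^2 * star q (Yn q k) (wd [Y]) v - star q (wd [Y]) (Yn q k) v = (q - inverse q) * q^2 * T q 1 1 (-1) (Suc (2*k+1)) v"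
      using ul sh unfolding k1 by (simp add: Yn_def T1_low qint1[OF c'])
    have "star q (Gn q k) (wd [Y]) (a # v) = star q (Yn q k) (wd [Y]) v"
      using S1 by (simp add: X D_wd_Cons Gn_def D_Px_X)
    moreover have "star q (wd [Y]) (Gn q k) (a # v) = inverse (q^2) * star q (wd [Y]) (Yn q k) v"
      using S2 q by (simp add: X D_wd_Cons Gn_def D_Px_X power_int_minus)
    moreover have "Yn q (k+1) (a # v) = T q 1 1 (-1) (Suc (2*k+1)) v"
      by (simp add: X Yn_def qint1[OF c'])
    moreover have "inverse (q^2) * q^2 = 1" using q by simp
    ultimately have "star q (Gn q k) (wd [Y]) (a # v) - star q (wd [Y]) (Gn q k) (a # v) = (q - inverse q) * Yn q (k+1) (a # v)"
      using ul2
    proof -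
      assume a1: "star q (Gn q k) (wd [Y]) (a # v) = star q (Yn q k) (wd [Y]) v"
        and a2: "star q (wd [Y]) (Gn q k) (a # v) = inverse (q^2) * star q (wd [Y]) (Yn q k) v"
        and a3: "Yn q (k + 1) (a # v) = T q 1 1 (- 1) (Suc (2 * k + 1)) v"
        and a4: "inverse (q^2) * q^2 = 1"
        and a5: "q^2 * star q (Yn q k) (wd [Y]) v - star q (wd [Y]) (Yn q k) v = (q - inverse q) * q^2 * T q 1 1 (- 1) (Suc (2 * k + 1)) v"
      define iq where "iq = inverse (q^2)"
      define cc where "cc = q - inverse q"
      define s1 where "s1 = star q (Gn q k) (wd [Y]) (a # v)"
      define s2 where "s2 = star q (Yn q k) (wd [Y]) v"
      define s3 where "s3 = star q (wd [Y]) (Gn q k) (a # v)"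
      define s4 where "s4 = star q (wd [Y]) (Yn q k) v"
      define s5 where "s5 = Yn q (k + 1) (a # v)"
      define s6 where "s6 = T q 1 1 (- 1) (Suc (2 * k + 1)) v"
      have b4: "iq * q^2 = 1" and b5: "q^2 * s2 - s4 = cc * q^2 * s6"
        using a4 a5 unfolding iq_def[symmetric] cc_def[symmetric] s2_def[symmetric] s4_def[symmetric] s6_def[symmetric] .
      have "s1 - s3 = iq * (q^2 * s2 - s4)" using a1 a2 b4 unfolding s1_def[symmetric] s2_def[symmetric] s3_def[symmetric] s4_def[symmetric] iq_def[symmetric]
        by (simp add: right_diff_distrib mult.assoc[symmetric])
      also have "\<dots> = (iq * q^2) * (cc * s6)" unfolding b5 by (simp add: mult_ac)
      finally show ?thesis using a3 b4 unfolding s1_def[symmetric] s3_def[symmetric] s5_def[symmetric] s6_def[symmetric] cc_def[symmetric] by simp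
    qed
    then show ?thesis using Cons by simp
  next
    case Y
    have "star q (Gn q k) (wd [Y]) (a # v) = Gn q k v"
      using S1 by (simp add: Y D_wd_Cons Gn_def D_Px_Y star_unit_r)
    moreover have "star q (wd [Y]) (Gn q k) (a # v) = Gn q k v"
      using S2 by (simp add: Y D_wd_Cons Gn_def D_Px_Y star_unit_l)
    moreover have "Yn q (k+1) (a # v) = 0"
      by (simp add: Y Yn_def T_start_m1)
    ultimately show ?thesis by (simp add: Cons)
  qed
qed

end

lemma to_diff: "(a::'a::ab_group_add) = b \<Longrightarrow> a - b = 0" by simp

lemma star_wd: "star q (wd u) (wd v) w = qsh q u v w"
  unfolding star_def supp_wd by (simp add: wd_def)

lemma xyexp:
  fixes q :: "'a::field"
  assumes q: "q \<noteq> 0"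
  shows "(q^4 - 1) * wd [X, Y] w = q^4 * star q (wd [X]) (wd [Y]) w - q^2 * star q (wd [Y]) (wd [X]) w"
proof -
  have e1: "star q (wd [X]) (wd [Y]) w = wd [X, Y] w + inverse (q^2) * wd [Y, X] w"
    unfolding star_wd by (auto simp: prep_def wd_def bform_def power_int_minus split: list.splits)
  have e2: "star q (wd [Y]) (wd [X]) w = wd [Y, X] w + inverse (q^2) * wd [X, Y] w"
    unfolding star_wd by (auto simp: prep_def wd_def bform_def power_int_minus split: list.splits)
  show ?thesis unfolding e1 e2 using q by (simp add: field_simps)
qed

context
  fixes q :: "'a::field_char_0"
  assumes q: "q \<noteq> 0" and c: "q*q - 1 \<noteq> 0"
begin

lemma c2: "q - inverse q \<noteq> 0" using q c by (simp add: field_simps)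

lemma PxU_C: "q^2 * star q (Xn q l) (wd [Y]) w - star q (wd [Y]) (Xn q l) w = (q - inverse q) * Cn q (l+1) w"
proof (cases w)
  case Nil then show ?thesis by (simp add: star_Nil Xn_def Cn_def)
next
  case (Cons a v)
  have S1: "star q (Xn q l) (wd [Y]) (a # v) = star q (D a (Xn q l)) (wd [Y]) v + q powi (2 * bar a * 1) * star q (Xn q l) (D a (wd [Y])) v"
    by (rule star_Cons) (simp_all add: hom_els)
  have S2: "star q (wd [Y]) (Xn q l) (a # v) = star q (D a (wd [Y])) (Xn q l) v + q powi (2 * bar a * (-1)) * star q (wd [Y]) (D a (Xn q l)) v"
    by (rule star_Cons) (simp_all add: hom_y)
  show ?thesis
  proof (cases a)
    case X
    have ul: "q^4 * (q powi 0)^2 * (q powi 0)^2 * star q (T q 1 0 0 (2*l)) (wd [Y]) v - star q (wd [Y]) (T q 1 0 0 (2*l)) v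
       = (q - inverse q) * q^2 * (q powi 0)^2 *
         (qint q (0+1) * T q 2 0 (0-1) (Suc (2*l)) v - qint q 0 * T q 1 0 (0-1) (Suc (2*l)) v)"
      by (rule UL[OF q c])
    have sh: "T q 2 0 (-1) (Suc (2*l)) v = T q 1 1 0 (Suc (2*l)) v"
      using T_shift[of q 1 0 "-1" "Suc (2*l)" v] by simp
    have ul2: "q^4 * star q (Cn q l) (wd [Y]) v - star q (wd [Y]) (Cn q l) v = (q - inverse q) * q^2 * T q 1 1 0 (Suc (2*l)) v"
      using ul sh by (simp add: Cn_def qint1[OF c2])
    have a1: "star q (Xn q l) (wd [Y]) (a # v) = star q (Cn q l) (wd [Y]) v"
      using S1 by (simp add: X D_wd_Cons Xn_def D_Px_X)
    have a2: "q^2 * star q (wd [Y]) (Xn q l) (a # v) = star q (wd [Y]) (Cn q l) v"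
      using S2 q by (simp add: X D_wd_Cons Xn_def D_Px_X power_int_minus)
    have a3: "Cn q (l+1) (a # v) = T q 1 1 0 (Suc (2*l)) v"
      by (simp add: X Cn_def qint1[OF c2])
    define s1 where "s1 = star q (Cn q l) (wd [Y]) v"
    define s2 where "s2 = star q (wd [Y]) (Xn q l) (a # v)"
    define s3 where "s3 = star q (wd [Y]) (Cn q l) v"
    define s4 where "s4 = T q 1 1 0 (Suc (2*l)) v"
    define cc where "cc = q - inverse q"
    have "q^2 * s1 - s2 = cc * s4"
    proof -
      have b2: "q^2 * s2 = s3" using a2 unfolding s2_def s3_def .
      have b3: "q^4 * s1 - s3 = cc * q^2 * s4" using ul2 unfolding s1_def s3_def s4_def cc_def .
      define iq where "iq = inverse (q^2)"
      have b4: "iq * q^2 = 1" using q unfolding iq_def by simp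
      show ?thesis using b2[THEN to_diff] b3[THEN to_diff] b4[THEN to_diff] by algebra
    qed
    then show ?thesis unfolding Cons a1 a3 s1_def s2_def s4_def cc_def .
  next
    case Y
    have a1: "star q (Xn q l) (wd [Y]) (a # v) = inverse (q^2) * Xn q l v"
      using S1 by (simp add: Y D_wd_Cons Xn_def D_Px_Y star_unit_r power_int_minus)
    have a2: "star q (wd [Y]) (Xn q l) (a # v) = Xn q l v"
      using S2 by (simp add: Y D_wd_Cons Xn_def D_Px_Y star_unit_l)
    have a3: "Cn q (l+1) (a # v) = 0"
      by (simp add: Y Cn_def T_start_m1)
    show ?thesis unfolding Cons a1 a2 a3 using q by simp
  qed
qed

end

context
  fixes q :: "'a::field_char_0"
  assumes q: "q \<noteq> 0" and c: "q*q - 1 \<noteq> 0" and c4: "q^4 - 1 \<noteq> 0"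
begin

lemma c3: "q - inverse q \<noteq> 0" using q c by (simp add: field_simps)

lemma W0C: "star q (Cn q l) (wd [X, Y]) w = star q (wd [X, Y]) (Cn q l) w"
proof -
  let ?x = "wd [X] :: 'a vec" and ?y = "wd [Y] :: 'a vec" and ?xy = "wd [X, Y] :: 'a vec" and ?C = "Cn q l"
  let ?c = "q - inverse q"
  let ?R = "\<lambda>v. q^4 * star q ?C ?y v - star q ?y ?C v"
  let ?P = "\<lambda>v. q^4 * star q ?x ?C v - star q ?C ?x v"
  let ?T110 = "T q 1 1 0 (Suc (2*l))" and ?T101 = "T q 1 0 1 (Suc (2*l))"
  let ?T200 = "T q 2 0 0 (Suc (Suc (2*l)))" and ?T100 = "T q 1 0 0 (Suc (Suc (2*l)))"
  have hC: "hom ?C 0" by (rule hom_els)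
  note hx = hom_x and hy = hom_y
  have Rf: "?R = (\<lambda>v. (?c * q^2) * ?T110 v)"
  proof
    fix v
    have ul: "q^4 * (q powi 0)^2 * (q powi 0)^2 * star q (T q 1 0 0 (2*l)) ?y v - star q ?y (T q 1 0 0 (2*l)) v
       = ?c * q^2 * (q powi 0)^2 *
         (qint q (0+1) * T q 2 0 (0-1) (Suc (2*l)) v - qint q 0 * T q 1 0 (0-1) (Suc (2*l)) v)"
      by (rule UL[OF q c])
    have sh: "T q 2 0 (-1) (Suc (2*l)) v = T q 1 1 0 (Suc (2*l)) v"
      using T_shift[of q 1 0 "-1" "Suc (2*l)" v] by simp
    show "?R v = (?c * q^2) * ?T110 v" using ul sh by (simp add: Cn_def qint1[OF c3])
  qed
  have Pf: "?P = (\<lambda>v. (?c * q^2 * qint q 2) * ?T101 v)"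
  proof
    fix v
    have vl: "q^4 * (q powi 0)^2 * (q powi 0)^2 * star q ?x (T q 1 0 0 (2*l)) v - star q (T q 1 0 0 (2*l)) ?x v
       = ?c * q^2 * (q powi 0)^2 *
         (qint q (0+2) * T q 1 0 (0+1) (Suc (2*l)) v - qint q (0+1) * T q 0 0 (0+1) (Suc (2*l)) v)"
      by (rule VL[OF q c])
    show "?P v = (?c * q^2 * qint q 2) * ?T101 v" using vl by (simp add: Cn_def T_start0)
  qed
  have sh1: "T q 1 1 1 (Suc (Suc (2*l))) w = ?T200 w" using T_shift[of q 1 0 0 "Suc (Suc (2*l))" w] by simp
  have sh2: "T q 0 1 1 (Suc (Suc (2*l))) w = ?T100 w" using T_shift[of q 0 0 0 "Suc (Suc (2*l))" w] by simp
  have V: "q^6 * star q ?x ?T110 w - star q ?T110 ?x w = ?c * q^2 * qint q 2 * (?T200 w - ?T100 w)"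
  proof -
    have vl: "q^4 * (q powi 0)^2 * (q powi 1)^2 * star q ?x ?T110 w - star q ?T110 ?x w
       = ?c * q^2 * (q powi 0)^2 *
         (qint q (0+2) * T q 1 1 (0+1) (Suc (Suc (2*l))) w - qint q (1+1) * T q 0 1 (0+1) (Suc (Suc (2*l))) w)"
      by (rule VL[OF q c])
    have e: "q^4 * (q powi 0)^2 * (q powi 1)^2 = q^6" by simp
    show ?thesis using vl sh1 sh2 unfolding e by (simp add: algebra_simps)
  qed
  have U: "q^6 * star q ?T101 ?y w - star q ?y ?T101 w = ?c * q^2 * (?T200 w - ?T100 w)"
  proof -
    have ul: "q^4 * (q powi 1)^2 * (q powi 0)^2 * star q ?T101 ?y w - star q ?y ?T101 w
       = ?c * q^2 * (q powi 0)^2 *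
         (qint q (0+1) * T q 2 0 (1-1) (Suc (Suc (2*l))) w - qint q 1 * T q 1 0 (1-1) (Suc (Suc (2*l))) w)"
      by (rule UL[OF q c])
    have e: "q^4 * (q powi 1)^2 * (q powi 0)^2 = q^6" by simp
    show ?thesis using ul unfolding e by (simp add: qint1[OF c3])
  qed
  have xyf: "(\<lambda>v. (q^4 - 1) * ?xy v) = (\<lambda>v. q^4 * star q ?x ?y v - q^2 * star q ?y ?x v)"
    by (rule ext) (rule xyexp[OF q])
  have E_xR: "star q ?x ?R w = q^4 * star q ?x (star q ?C ?y) w - star q ?x (star q ?y ?C) w"
    by (simp add: star_diff_r star_scale_r)
  have E_Rx: "star q ?R ?x w = q^4 * star q ?C (star q ?y ?x) w - star q ?y (star q ?C ?x) w"
    by (simp add: star_diff_l star_scale_l star_assoc[OF q _ _ _ hC hy] star_assoc[OF q _ _ _ hy hC])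
  have E_Py: "star q ?P ?y w = q^4 * star q ?x (star q ?C ?y) w - star q ?C (star q ?x ?y) w"
    by (simp add: star_diff_l star_scale_l star_assoc[OF q _ _ _ hx hC] star_assoc[OF q _ _ _ hC hx])
  have E_yP: "star q ?y ?P w = q^4 * star q ?y (star q ?x ?C) w - star q ?y (star q ?C ?x) w"
    by (simp add: star_diff_r star_scale_r)
  have E_Cxy: "(q^4 - 1) * star q ?C ?xy w = q^4 * star q ?C (star q ?x ?y) w - q^2 * star q ?C (star q ?y ?x) w"
  proof -
    have "(q^4 - 1) * star q ?C ?xy w = star q ?C (\<lambda>v. (q^4 - 1) * ?xy v) w"
      by (simp add: star_scale_r)
    also have "\<dots> = q^4 * star q ?C (star q ?x ?y) w - q^2 * star q ?C (star q ?y ?x) w"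
      unfolding xyf by (simp add: star_diff_r star_scale_r)
    finally show ?thesis .
  qed
  have E_xyC: "(q^4 - 1) * star q ?xy ?C w = q^4 * star q ?x (star q ?y ?C) w - q^2 * star q ?y (star q ?x ?C) w"
  proof -
    have "(q^4 - 1) * star q ?xy ?C w = star q (\<lambda>v. (q^4 - 1) * ?xy v) ?C w"
      by (simp add: star_scale_l)
    also have "\<dots> = q^4 * star q ?x (star q ?y ?C) w - q^2 * star q ?y (star q ?x ?C) w"
      unfolding xyf by (simp add: star_diff_l star_scale_l star_assoc[OF q _ _ _ hx hy] star_assoc[OF q _ _ _ hy hx])
    finally show ?thesis .
  qed
  have C_xR: "star q ?x ?R w = (?c * q^2) * star q ?x ?T110 w" unfolding Rf by (simp add: star_scale_r)
  have C_Rx: "star q ?R ?x w = (?c * q^2) * star q ?T110 ?x w" unfolding Rf by (simp add: star_scale_l)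
  have C_Py: "star q ?P ?y w = (?c * q^2 * qint q 2) * star q ?T101 ?y w" unfolding Pf by (simp add: star_scale_l)
  have C_yP: "star q ?y ?P w = (?c * q^2 * qint q 2) * star q ?y ?T101 w" unfolding Pf by (simp add: star_scale_r)
  define a1 where "a1 = star q ?x (star q ?C ?y) w"
  define a2 where "a2 = star q ?x (star q ?y ?C) w"
  define a3 where "a3 = star q ?C (star q ?y ?x) w"
  define a4 where "a4 = star q ?y (star q ?C ?x) w"
  define a5 where "a5 = star q ?C (star q ?x ?y) w"
  define a6 where "a6 = star q ?y (star q ?x ?C) w"
  define b1 where "b1 = star q ?x ?R w"
  define b2 where "b2 = star q ?R ?x w"
  define b3 where "b3 = star q ?P ?y w"
  define b4 where "b4 = star q ?y ?P w"
  define d1 where "d1 = star q ?x ?T110 w"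
  define d2 where "d2 = star q ?T110 ?x w"
  define d3 where "d3 = star q ?T101 ?y w"
  define d4 where "d4 = star q ?y ?T101 w"
  define z1 where "z1 = star q ?C ?xy w"
  define z2 where "z2 = star q ?xy ?C w"
  define t1 where "t1 = ?T200 w"
  define t2 where "t2 = ?T100 w"
  define cc where "cc = ?c"
  define k2 where "k2 = qint q 2"
  have f1: "b1 = q^4 * a1 - a2" using E_xR unfolding b1_def a1_def a2_def .
  have f2: "b2 = q^4 * a3 - a4" using E_Rx unfolding b2_def a3_def a4_def .
  have f3: "b3 = q^4 * a1 - a5" using E_Py unfolding b3_def a1_def a5_def .
  have f4: "b4 = q^4 * a6 - a4" using E_yP unfolding b4_def a6_def a4_def .
  have f5: "(q^4 - 1) * z1 = q^4 * a5 - q^2 * a3" using E_Cxy unfolding z1_def a5_def a3_def .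
  have f6: "(q^4 - 1) * z2 = q^4 * a2 - q^2 * a6" using E_xyC unfolding z2_def a2_def a6_def .
  have g1: "b1 = (cc * q^2) * d1" using C_xR unfolding b1_def d1_def cc_def .
  have g2: "b2 = (cc * q^2) * d2" using C_Rx unfolding b2_def d2_def cc_def .
  have g3: "b3 = (cc * q^2 * k2) * d3" using C_Py unfolding b3_def d3_def cc_def k2_def .
  have g4: "b4 = (cc * q^2 * k2) * d4" using C_yP unfolding b4_def d4_def cc_def k2_def .
  have g5: "q^6 * d1 - d2 = cc * q^2 * k2 * (t1 - t2)" using V unfolding d1_def d2_def cc_def k2_def t1_def t2_def .
  have g6: "q^6 * d3 - d4 = cc * q^2 * (t1 - t2)" using U unfolding d3_def d4_def cc_def t1_def t2_def .
  have s1: "q^6*b1 - b2 - q^6*b3 + b4 = q^2 * ((q^4 - 1) * z1) - q^2 * ((q^4 - 1) * z2)"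
    unfolding f1 f2 f3 f4 f5 f6 by (simp add: algebra_simps)
  have s2: "q^6*b1 - b2 = cc*q^2*(q^6*d1 - d2)"
    unfolding g1 g2 by (simp add: algebra_simps)
  have s3: "q^6*b3 - b4 = cc*q^2*k2*(q^6*d3 - d4)"
    unfolding g3 g4 by (simp add: algebra_simps)
  have "q^2 * ((q^4 - 1) * (z1 - z2)) = (q^6*b1 - b2) - (q^6*b3 - b4)"
    using s1 by (simp add: algebra_simps)
  also have "\<dots> = 0" unfolding s2 s3 g5 g6 by (simp add: algebra_simps)
  finally have "q^2 * ((q^4 - 1) * (z1 - z2)) = 0" .
  then have "z1 - z2 = 0" using q c4 by simp
  then show ?thesis unfolding z1_def z2_def by simp
qed

end

context
  fixes q :: "'a::field_char_0"
  assumes q: "q \<noteq> 0" and c: "q*q - 1 \<noteq> 0" and c4: "q^4 - 1 \<noteq> 0"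
begin

lemma id_ii: "star q (Xn q l) (wd [X, Y]) w - star q (wd [X, Y]) (Xn q l) w = (q - inverse q) * Xn q (l+1) w"
proof (cases w)
  case Nil then show ?thesis by (simp add: star_Nil Xn_def)
next
  case (Cons a v)
  have S1: "star q (Xn q l) (wd [X, Y]) (a # v) = star q (D a (Xn q l)) (wd [X, Y]) v + q powi (2 * bar a * 1) * star q (Xn q l) (D a (wd [X, Y])) v"
    by (rule star_Cons) (simp_all add: hom_els)
  have S2: "star q (wd [X, Y]) (Xn q l) (a # v) = star q (D a (wd [X, Y])) (Xn q l) v + q powi (2 * bar a * 0) * star q (wd [X, Y]) (D a (Xn q l)) v"
    by (rule star_Cons) (simp_all add: hom_xy)
  show ?thesis
  proof (cases a)
    case X
    have a1: "star q (Xn q l) (wd [X, Y]) (a # v) = star q (Cn q l) (wd [X, Y]) v + q^2 * star q (Xn q l) (wd [Y]) v"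
      using S1 by (simp add: X D_wd_Cons Xn_def D_Px_X)
    have a2: "star q (wd [X, Y]) (Xn q l) (a # v) = star q (wd [Y]) (Xn q l) v + star q (wd [X, Y]) (Cn q l) v"
      using S2 by (simp add: X D_wd_Cons Xn_def D_Px_X)
    have w0: "star q (Cn q l) (wd [X, Y]) v = star q (wd [X, Y]) (Cn q l) v" by (rule W0C[OF q c c4])
    have pu: "q^2 * star q (Xn q l) (wd [Y]) v - star q (wd [Y]) (Xn q l) v = (q - inverse q) * Cn q (l+1) v"
      by (rule PxU_C[OF q c])
    show ?thesis unfolding Cons a1 a2 using w0 pu by (simp add: X Xn_def algebra_simps)
  next
    case Y
    have "star q (Xn q l) (wd [X, Y]) (a # v) = 0" using S1 by (simp add: Y D_wd_Cons Xn_def D_Px_Y)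
    moreover have "star q (wd [X, Y]) (Xn q l) (a # v) = 0" using S2 by (simp add: Y D_wd_Cons Xn_def D_Px_Y)
    ultimately show ?thesis by (simp add: Cons Y Xn_def)
  qed
qed

lemma id_ii': "star q (wd [X, Y]) (Yn q l) w - star q (Yn q l) (wd [X, Y]) w = (q - inverse q) * Yn q (l+1) w"
proof -
  let ?x = "wd [X] :: 'a vec" and ?y = "wd [Y] :: 'a vec" and ?xy = "wd [X, Y] :: 'a vec" and ?Y = "Yn q l"
  let ?c = "q - inverse q"
  let ?P = "\<lambda>v. q^2 * star q ?x ?Y v - star q ?Y ?x v"
  let ?R = "\<lambda>v. q^2 * star q ?Y ?y v - star q ?y ?Y v"
  let ?T100 = "T q 1 0 0 (Suc (Suc (2*l)))" and ?T11m = "T q 1 1 (-1) (Suc (Suc (2*l)))"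
  let ?T20m = "T q 2 0 (-1) (Suc (Suc (Suc (2*l))))" and ?T110 = "T q 1 1 0 (Suc (Suc (Suc (2*l))))"
  let ?T010 = "T q 0 1 0 (Suc (Suc (Suc (2*l))))"
  have hY: "hom ?Y (-1)" by (rule hom_els)
  note hx = hom_x and hy = hom_y
  have k1: "q^4 * (q powi (-1))^2 * (q powi 0)^2 = q^2" using q by (simp add: power_int_minus field_simps)
  have k2: "?c * q^2 * (q powi (-1))^2 = ?c" using q by (simp add: power_int_minus field_simps)
  have Pf: "?P = (\<lambda>v. ?c * ?T100 v)"
  proof
    fix v
    have vl: "q^4 * (q powi (-1))^2 * (q powi 0)^2 * star q ?x (T q 1 0 (-1) (2*l+1)) v - star q (T q 1 0 (-1) (2*l+1)) ?x v
       = ?c * q^2 * (q powi (-1))^2 *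
         (qint q (-1+2) * T q 1 0 (-1+1) (Suc (2*l+1)) v - qint q (0+1) * T q 0 0 (-1+1) (Suc (2*l+1)) v)"
      by (rule VL[OF q c])
    show "?P v = ?c * ?T100 v" using vl unfolding k1 k2 by (simp add: Yn_def T_start0 qint1[OF c3[OF q c c4]])
  qed
  have Rf: "?R = (\<lambda>v. (?c * q^2) * ?T11m v)"
  proof
    fix v
    have ul: "q^4 * (q powi (-1))^2 * (q powi 0)^2 * star q (T q 1 0 (-1) (2*l+1)) ?y v - star q ?y (T q 1 0 (-1) (2*l+1)) v
       = ?c * q^2 * (q powi 0)^2 *
         (qint q (0+1) * T q 2 0 (-1-1) (Suc (2*l+1)) v - qint q (-1) * T q 1 0 (-1-1) (Suc (2*l+1)) v)"
      by (rule UL[OF q c])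
    have sh: "T q 2 0 (-2) (Suc (2*l+1)) v = T q 1 1 (-1) (Suc (2*l+1)) v"
      using T_shift[of q 1 0 "-2" "Suc (2*l+1)" v] by simp
    show "?R v = (?c * q^2) * ?T11m v" using ul sh unfolding k1 by (simp add: Yn_def T1_low qint1[OF c3[OF q c c4]])
  qed
  have U: "q^4 * star q ?T100 ?y w - star q ?y ?T100 w = ?c * q^2 * ?T20m w"
  proof -
    have ul: "q^4 * (q powi 0)^2 * (q powi 0)^2 * star q ?T100 ?y w - star q ?y ?T100 w
       = ?c * q^2 * (q powi 0)^2 *
         (qint q (0+1) * T q 2 0 (0-1) (Suc (Suc (Suc (2*l)))) w - qint q 0 * T q 1 0 (0-1) (Suc (Suc (Suc (2*l)))) w)"
      by (rule UL[OF q c])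
    then show ?thesis by (simp add: qint1[OF c3[OF q c c4]])
  qed
  have V: "q^4 * star q ?x ?T11m w - star q ?T11m ?x w = ?c * (?T110 w - qint q 2 * ?T010 w)"
  proof -
    have vl: "q^4 * (q powi (-1))^2 * (q powi 1)^2 * star q ?x ?T11m w - star q ?T11m ?x w
       = ?c * q^2 * (q powi (-1))^2 *
         (qint q (-1+2) * T q 1 1 (-1+1) (Suc (Suc (Suc (2*l)))) w - qint q (1+1) * T q 0 1 (-1+1) (Suc (Suc (Suc (2*l)))) w)"
      by (rule VL[OF q c])
    have e: "q^4 * (q powi (-1))^2 * (q powi 1)^2 = q^4" using q by (simp add: power_int_minus field_simps)
    show ?thesis using vl unfolding e k2 by (simp add: qint1[OF c3[OF q c c4]])
  qed
  have sh1: "?T20m w = ?T110 w" using T_shift[of q 1 0 "-1" "Suc (Suc (Suc (2*l)))" w] by simp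
  have sh2: "?T010 w = Yn q (l+1) w" using T_shift[of q 0 0 "-1" "Suc (Suc (Suc (2*l)))" w] by (simp add: Yn_def)
  have k3: "?c * q^2 * qint q 2 = q^4 - 1"
    using qint_mul[OF c3[OF q c c4], of 2] q by (simp add: field_simps)
  have xyf: "(\<lambda>v. (q^4 - 1) * ?xy v) = (\<lambda>v. q^4 * star q ?x ?y v - q^2 * star q ?y ?x v)"
    by (rule ext) (rule xyexp[OF q])
  have E_Py: "star q ?P ?y w = q^2 * star q ?x (star q ?Y ?y) w - star q ?Y (star q ?x ?y) w"
    by (simp add: star_diff_l star_scale_l star_assoc[OF q _ _ _ hx hY] star_assoc[OF q _ _ _ hY hx])
  have E_yP: "star q ?y ?P w = q^2 * star q ?y (star q ?x ?Y) w - star q ?y (star q ?Y ?x) w"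
    by (simp add: star_diff_r star_scale_r)
  have E_xR: "star q ?x ?R w = q^2 * star q ?x (star q ?Y ?y) w - star q ?x (star q ?y ?Y) w"
    by (simp add: star_diff_r star_scale_r)
  have E_Rx: "star q ?R ?x w = q^2 * star q ?Y (star q ?y ?x) w - star q ?y (star q ?Y ?x) w"
    by (simp add: star_diff_l star_scale_l star_assoc[OF q _ _ _ hY hy] star_assoc[OF q _ _ _ hy hY])
  have E_xyY: "(q^4 - 1) * star q ?xy ?Y w = q^4 * star q ?x (star q ?y ?Y) w - q^2 * star q ?y (star q ?x ?Y) w"
  proof -
    have "(q^4 - 1) * star q ?xy ?Y w = star q (\<lambda>v. (q^4 - 1) * ?xy v) ?Y w"
      by (simp add: star_scale_l)
    also have "\<dots> = q^4 * star q ?x (star q ?y ?Y) w - q^2 * star q ?y (star q ?x ?Y) w"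
      unfolding xyf by (simp add: star_diff_l star_scale_l star_assoc[OF q _ _ _ hx hy] star_assoc[OF q _ _ _ hy hx])
    finally show ?thesis .
  qed
  have E_Yxy: "(q^4 - 1) * star q ?Y ?xy w = q^4 * star q ?Y (star q ?x ?y) w - q^2 * star q ?Y (star q ?y ?x) w"
  proof -
    have "(q^4 - 1) * star q ?Y ?xy w = star q ?Y (\<lambda>v. (q^4 - 1) * ?xy v) w"
      by (simp add: star_scale_r)
    also have "\<dots> = q^4 * star q ?Y (star q ?x ?y) w - q^2 * star q ?Y (star q ?y ?x) w"
      unfolding xyf by (simp add: star_diff_r star_scale_r)
    finally show ?thesis .
  qed
  have C_Py: "star q ?P ?y w = ?c * star q ?T100 ?y w" unfolding Pf by (simp add: star_scale_l)
  have C_yP: "star q ?y ?P w = ?c * star q ?y ?T100 w" unfolding Pf by (simp add: star_scale_r)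
  have C_xR: "star q ?x ?R w = (?c * q^2) * star q ?x ?T11m w" unfolding Rf by (simp add: star_scale_r)
  have C_Rx: "star q ?R ?x w = (?c * q^2) * star q ?T11m ?x w" unfolding Rf by (simp add: star_scale_l)
  define a1 where "a1 = star q ?x (star q ?Y ?y) w"
  define a2 where "a2 = star q ?Y (star q ?x ?y) w"
  define a3 where "a3 = star q ?y (star q ?x ?Y) w"
  define a4 where "a4 = star q ?y (star q ?Y ?x) w"
  define a5 where "a5 = star q ?x (star q ?y ?Y) w"
  define a6 where "a6 = star q ?Y (star q ?y ?x) w"
  define b1 where "b1 = star q ?P ?y w"
  define b2 where "b2 = star q ?y ?P w"
  define b3 where "b3 = star q ?x ?R w"
  define b4 where "b4 = star q ?R ?x w"
  define d1 where "d1 = star q ?T100 ?y w"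
  define d2 where "d2 = star q ?y ?T100 w"
  define d3 where "d3 = star q ?x ?T11m w"
  define d4 where "d4 = star q ?T11m ?x w"
  define z1 where "z1 = star q ?xy ?Y w"
  define z2 where "z2 = star q ?Y ?xy w"
  define t1 where "t1 = ?T110 w"
  define t2 where "t2 = Yn q (l+1) w"
  define cc where "cc = ?c"
  define k2 where "k2 = qint q 2"
  have f1: "b1 = q^2 * a1 - a2" using E_Py unfolding b1_def a1_def a2_def .
  have f2: "b2 = q^2 * a3 - a4" using E_yP unfolding b2_def a3_def a4_def .
  have f3: "b3 = q^2 * a1 - a5" using E_xR unfolding b3_def a1_def a5_def .
  have f4: "b4 = q^2 * a6 - a4" using E_Rx unfolding b4_def a6_def a4_def .
  have f5: "(q^4 - 1) * z1 = q^4 * a5 - q^2 * a3" using E_xyY unfolding z1_def a5_def a3_def .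
  have f6: "(q^4 - 1) * z2 = q^4 * a2 - q^2 * a6" using E_Yxy unfolding z2_def a2_def a6_def .
  have g1: "b1 = cc * d1" using C_Py unfolding b1_def d1_def cc_def .
  have g2: "b2 = cc * d2" using C_yP unfolding b2_def d2_def cc_def .
  have g3: "b3 = (cc * q^2) * d3" using C_xR unfolding b3_def d3_def cc_def .
  have g4: "b4 = (cc * q^2) * d4" using C_Rx unfolding b4_def d4_def cc_def .
  have g5: "q^4 * d1 - d2 = cc * q^2 * t1" using U sh1 unfolding d1_def d2_def cc_def t1_def by simp
  have g6: "q^4 * d3 - d4 = cc * (t1 - k2 * t2)" using V sh2 unfolding d3_def d4_def cc_def t1_def t2_def k2_def by simp
  have k3': "cc * q^2 * k2 = q^4 - 1" using k3 unfolding cc_def k2_def .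
  have s1: "(q^4*b1 - b2) - (q^4*b3 - b4) = (q^4 - 1) * z1 - (q^4 - 1) * z2"
    unfolding f1 f2 f3 f4 f5 f6 by (simp add: algebra_simps)
  have s2: "q^4*b1 - b2 = cc*(q^4*d1 - d2)"
    unfolding g1 g2 by (simp add: algebra_simps)
  have s3: "q^4*b3 - b4 = cc*q^2*(q^4*d3 - d4)"
    unfolding g3 g4 by (simp add: algebra_simps)
  have "(q^4 - 1) * (z1 - z2) = (q^4*b1 - b2) - (q^4*b3 - b4)"
    using s1 by (simp add: algebra_simps)
  also have "\<dots> = cc * (cc * q^2 * k2) * t2" unfolding s2 s3 g5 g6 by (simp add: algebra_simps)
  also have "\<dots> = (q^4 - 1) * (cc * t2)" unfolding k3' by (simp add: algebra_simps)
  finally have "(q^4 - 1) * (z1 - z2) = (q^4 - 1) * (cc * t2)" .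
  then have "z1 - z2 = cc * t2" using c4 by simp
  then show ?thesis unfolding z1_def z2_def cc_def t2_def .
qed

lemma id_iii: "star q (wd [X, Y]) (Gn q k) w = star q (Gn q k) (wd [X, Y]) w"
proof (cases w)
  case Nil then show ?thesis by (simp add: star_Nil Gn_def)
next
  case (Cons a v)
  have S1: "star q (wd [X, Y]) (Gn q k) (a # v) = star q (D a (wd [X, Y])) (Gn q k) v + q powi (2 * bar a * 0) * star q (wd [X, Y]) (D a (Gn q k)) v"
    by (rule star_Cons) (simp_all add: hom_xy)
  have S2: "star q (Gn q k) (wd [X, Y]) (a # v) = star q (D a (Gn q k)) (wd [X, Y]) v + q powi (2 * bar a * 0) * star q (Gn q k) (D a (wd [X, Y])) v"
    by (rule star_Cons) (simp_all add: hom_els)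
  show ?thesis
  proof (cases a)
    case X
    have a1: "star q (wd [X, Y]) (Gn q k) (a # v) = star q (wd [Y]) (Gn q k) v + star q (wd [X, Y]) (Yn q k) v"
      using S1 by (simp add: X D_wd_Cons Gn_def D_Px_X)
    have a2: "star q (Gn q k) (wd [X, Y]) (a # v) = star q (Yn q k) (wd [X, Y]) v + star q (Gn q k) (wd [Y]) v"
      using S2 by (simp add: X D_wd_Cons Gn_def D_Px_X)
    have i1: "star q (Gn q k) (wd [Y]) v - star q (wd [Y]) (Gn q k) v = (q - inverse q) * Yn q (k+1) v"
      by (rule id_i'[OF q c])
    have i2: "star q (wd [X, Y]) (Yn q k) v - star q (Yn q k) (wd [X, Y]) v = (q - inverse q) * Yn q (k+1) v"
      by (rule id_ii')
    define p1 where "p1 = star q (Gn q k) (wd [Y]) v"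
    define p2 where "p2 = star q (wd [Y]) (Gn q k) v"
    define p3 where "p3 = star q (wd [X, Y]) (Yn q k) v"
    define p4 where "p4 = star q (Yn q k) (wd [X, Y]) v"
    have "p1 - p2 - (p3 - p4) = 0" using i1 i2 unfolding p1_def p2_def p3_def p4_def by simp
    then have "p2 + p3 = p4 + p1" by algebra
    then show ?thesis unfolding Cons a1 a2 p1_def p2_def p3_def p4_def .
  next
    case Y
    have "star q (wd [X, Y]) (Gn q k) (a # v) = 0" using S1 by (simp add: Y D_wd_Cons Gn_def D_Px_Y)
    moreover have "star q (Gn q k) (wd [X, Y]) (a # v) = 0" using S2 by (simp add: Y D_wd_Cons Gn_def D_Px_Y)
    ultimately show ?thesis by (simp add: Cons)
  qed
qed

end

definition com :: "'a::field \<Rightarrow> 'a vec \<Rightarrow> 'a vec \<Rightarrow> 'a vec" where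
  "com q f g = (\<lambda>w. star q f g w - star q g f w)"

lemma fin_com[simp]: "fin f \<Longrightarrow> fin g \<Longrightarrow> fin (com q f g)"
  unfolding com_def by simp

lemma hom_com: "hom f d1 \<Longrightarrow> hom g d2 \<Longrightarrow> hom (com q f g) (d1 + d2)"
  unfolding com_def using hom_star[of f d1 g d2 q] hom_star[of g d2 f d1 q]
  by (intro hom_diff) (simp_all add: add.commute)

lemma com_scale_l: "fin f \<Longrightarrow> fin g \<Longrightarrow> com q (\<lambda>v. a * f v) g w = a * com q f g w"
  unfolding com_def by (simp add: star_scale_l star_scale_r algebra_simps)
lemma com_scale_r: "fin f \<Longrightarrow> fin g \<Longrightarrow> com q f (\<lambda>v. a * g v) w = a * com q f g w"
  unfolding com_def by (simp add: star_scale_l star_scale_r algebra_simps)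
lemma com_zero_r: "com q f (\<lambda>v. 0) w = 0" unfolding com_def by simp
lemma com_zero_l: "com q (\<lambda>v. 0) f w = 0" unfolding com_def by simp
lemma com_anti: "com q f g w = - com q g f w" unfolding com_def by simp

lemma jacobi:
  fixes q :: "'a::field"
  assumes q: "q \<noteq> 0" and f: "fin A" "fin B" "fin C" and h: "hom A dA" "hom B dB" "hom C dC"
  shows "com q (com q A B) C w = com q (com q A C) B w + com q A (com q B C) w"
proof -
  have as: "\<And>P Q R dP dQ. fin P \<Longrightarrow> fin Q \<Longrightarrow> fin R \<Longrightarrow> hom P dP \<Longrightarrow> hom Q dQ \<Longrightarrow>
      star q (star q P Q) R w = star q P (star q Q R) w"
    using star_assoc[OF q] by blast
  have e1: "com q (com q A B) C w = star q A (star q B C) w - star q B (star q A C) w - (star q C (star q A B) w - star q C (star q B A) w)"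
    unfolding com_def using f h by (simp add: star_diff_l star_diff_r as[of A B C dA dB] as[of B A C dB dA])
  have e2: "com q (com q A C) B w = star q A (star q C B) w - star q C (star q A B) w - (star q B (star q A C) w - star q B (star q C A) w)"
    unfolding com_def using f h by (simp add: star_diff_l star_diff_r as[of A C B dA dC] as[of C A B dC dA])
  have e3: "com q A (com q B C) w = star q A (star q B C) w - star q A (star q C B) w - (star q B (star q C A) w - star q C (star q B A) w)"
    unfolding com_def using f h by (simp add: star_diff_l star_diff_r as[of B C A dB dC] as[of C B A dC dB])
  show ?thesis unfolding e1 e2 e3 by (simp add: algebra_simps)
qed

context
  fixes q :: "'a::field_char_0"
  assumes q: "q \<noteq> 0" and c: "q*q - 1 \<noteq> 0" and c4: "q^4 - 1 \<noteq> 0"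
begin

lemma cc0: "q - inverse q \<noteq> 0" using q c by (simp add: field_simps)

lemma main1: "com q (Xn q l) (Gn q k) = (\<lambda>w. (q - inverse q) * Xn q (k + l + 1) w)"
proof (induction l arbitrary: k)
  case 0
  show ?case unfolding Xn0 com_def using id_i[OF q c, of k] by simp
next
  case (Suc l)
  let ?c = "q - inverse q"
  have G0: "Gn q 0 = wd [X, Y]" by (rule Gn0[OF cc0])
  have ii: "\<And>m. com q (Xn q m) (Gn q 0) = (\<lambda>w. ?c * Xn q (m+1) w)"
    unfolding com_def G0 using id_ii[OF q c c4] by blast
  have XS: "Xn q (Suc l) = (\<lambda>w. inverse ?c * com q (Xn q l) (Gn q 0) w)"
    unfolding ii using cc0 by (intro ext) (simp add: mult.assoc[symmetric])
  have iii: "com q (Gn q 0) (Gn q k) = (\<lambda>w. 0)"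
    unfolding com_def G0 using id_iii[OF q c c4] by simp
  show ?case
  proof
    fix w
    have "com q (Xn q (Suc l)) (Gn q k) w = inverse ?c * com q (com q (Xn q l) (Gn q 0)) (Gn q k) w"
      unfolding XS by (simp add: com_scale_l)
    also have "com q (com q (Xn q l) (Gn q 0)) (Gn q k) w
        = com q (com q (Xn q l) (Gn q k)) (Gn q 0) w + com q (Xn q l) (com q (Gn q 0) (Gn q k)) w"
      by (rule jacobi[OF q _ _ _ hom_els(3) hom_els(4) hom_els(4)]) simp_all
    also have "\<dots> = ?c * (?c * Xn q (k + l + 1 + 1) w)"
      unfolding Suc.IH iii com_zero_r by (simp add: com_scale_l ii)
    finally show "com q (Xn q (Suc l)) (Gn q k) w = ?c * Xn q (k + Suc l + 1) w"
      using cc0 by simp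
  qed
qed

lemma main2: "com q (Gn q k) (Yn q l) = (\<lambda>w. (q - inverse q) * Yn q (k + l + 1) w)"
proof (induction l arbitrary: k)
  case 0
  show ?case unfolding Yn0[OF cc0] com_def using id_i'[OF q c, of k] by (simp add: Yn0[OF cc0])
next
  case (Suc l)
  let ?c = "q - inverse q"
  have G0: "Gn q 0 = wd [X, Y]" by (rule Gn0[OF cc0])
  have ii: "\<And>m. com q (Gn q 0) (Yn q m) = (\<lambda>w. ?c * Yn q (m+1) w)"
    unfolding com_def G0 using id_ii'[OF q c c4] by blast
  have YS: "Yn q (Suc l) = (\<lambda>w. inverse ?c * com q (Gn q 0) (Yn q l) w)"
    unfolding ii using cc0 by (intro ext) (simp add: mult.assoc[symmetric])
  have iii: "com q (Gn q k) (Gn q 0) = (\<lambda>w. 0)"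
    unfolding com_def G0 using id_iii[OF q c c4] by simp
  show ?case
  proof
    fix w
    have "com q (Gn q k) (Yn q (Suc l)) w = inverse ?c * com q (Gn q k) (com q (Gn q 0) (Yn q l)) w"
      unfolding YS by (simp add: com_scale_r)
    also have "com q (com q (Gn q k) (Gn q 0)) (Yn q l) w
        = com q (com q (Gn q k) (Yn q l)) (Gn q 0) w + com q (Gn q k) (com q (Gn q 0) (Yn q l)) w"
      by (rule jacobi[OF q _ _ _ hom_els(4) hom_els(4) hom_els(2)]) simp_all
    then have "com q (Gn q k) (com q (Gn q 0) (Yn q l)) w = - com q (com q (Gn q k) (Yn q l)) (Gn q 0) w"
      unfolding iii com_zero_l by (metis add.commute eq_neg_iff_add_eq_0)
    also have "\<dots> = ?c * (?c * Yn q (k + l + 1 + 1) w)"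
    proof -
      have a: "com q (com q (Gn q k) (Yn q l)) (Gn q 0) w = ?c * com q (Yn q (k + l + 1)) (Gn q 0) w"
        unfolding Suc.IH by (simp add: com_scale_l)
      have b: "com q (Yn q (k + l + 1)) (Gn q 0) w = - (?c * Yn q (k + l + 1 + 1) w)"
        using com_anti[of q "Yn q (k + l + 1)" "Gn q 0" w] ii[of "k + l + 1"] by simp
      show ?thesis unfolding a b by simp
    qed
    finally show "com q (Gn q k) (Yn q (Suc l)) w = ?c * Yn q (k + Suc l + 1) w"
      using cc0 by simp
  qed
qed

end

lemma conc_wdX: "conc (wd [X]) F = Px F"
proof
  fix w
  have t: "i \<le> length w \<Longrightarrow> wd [X] (take i w) * F (drop i w) = (if i = 1 then Px F w else 0)" for i
    by (cases w; cases i) (auto simp: wd_def Px_def)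
  have "conc (wd [X]) F w = (\<Sum>i\<le>length w. if i = 1 then Px F w else 0)"
    unfolding conc_def by (rule sum.cong) (auto simp: t)
  also have "\<dots> = Px F w" by (cases w) (auto simp: sum.delta Suc_le_eq)
  finally show "conc (wd [X]) F w = Px F w" .
qed

lemma conc_wdY: "conc F (wd [Y]) w = (if w \<noteq> [] \<and> last w = Y then F (butlast w) else 0)"
proof (cases w rule: rev_cases)
  case Nil then show ?thesis by (simp add: conc_def wd_def)
next
  case (snoc v a)
  have t: "F (take i (v @ [a])) * wd [Y] (drop i (v @ [a])) = (if i = length v \<and> a = Y then F v else 0)"
    if i: "i \<le> length (v @ [a])" for i
  proof (cases "i \<le> length v")
    case True
    have d: "drop i (v @ [a]) = drop i v @ [a]" and tk: "take i (v @ [a]) = take i v" using True by simp_all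
    have e: "(drop i v @ [a] = [Y]) = (drop i v = [] \<and> a = Y)" by (cases "drop i v") auto
    have e2: "(drop i v = []) = (i = length v)" using True by auto
    show ?thesis unfolding d tk using e e2 by (auto simp: wd_def)
  next
    case False
    with i have "i = length v + 1" by simp
    then show ?thesis by (simp add: wd_def)
  qed
  have "conc F (wd [Y]) w = (\<Sum>i\<le>length (v @ [a]). if i = length v \<and> a = Y then F v else 0)"
    unfolding conc_def snoc by (rule sum.cong[OF refl]) (rule t, simp)
  also have "\<dots> = (if a = Y then F v else 0)" by (simp add: sum.delta)
  finally show ?thesis using snoc by simp
qed

lemma conc_Px_Y: "conc (Px F) (wd [Y]) = Px (conc F (wd [Y]))"
proof
  fix w
  show "conc (Px F) (wd [Y]) w = Px (conc F (wd [Y])) w"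
  proof (cases w)
    case Nil then show ?thesis by (simp add: conc_wdY)
  next
    case (Cons a v)
    show ?thesis
    proof (cases v)
      case Nil then show ?thesis using Cons by (cases a) (simp_all add: conc_wdY)
    next
      case (Cons b v') then show ?thesis using \<open>w = a # v\<close> by (cases a) (simp_all add: conc_wdY)
    qed
  qed
qed

lemma conc_Cn_Y:
  assumes c: "(q::'a::field) - inverse q \<noteq> 0"
  shows "conc (Cn q n) (wd [Y]) = Yn q n"
proof
  fix w
  show "conc (Cn q n) (wd [Y]) w = Yn q n w"
  proof (cases w rule: rev_cases)
    case Nil then show ?thesis by (simp add: conc_wdY Yn_def)
  next
    case (snoc v a)
    have "Yn q n w = T q 1 0 (-1 - bar a) (2*n) v * qint q (-1 - bar a + 1)"
      unfolding Yn_def snoc using T_snoc[of q 1 0 "-1" "2*n" v a] by simp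
    also have "\<dots> = (if a = Y then Cn q n v else 0)"
      by (cases a) (simp_all add: Cn_def qint1[OF c] T1_low)
    finally show ?thesis using snoc by (simp add: conc_wdY)
  qed
qed

lemma if_distrib_mult: "(c::'a::field) * (if P then x else 0) = (if P then c * x else 0)" by simp

lemma sum_pref_Cons: "(\<Sum>j<Suc i. bar ((a # w) ! j)) = bar a + (\<Sum>j<i. bar (w ! j))"
  unfolding sum.lessThan_Suc_shift by simp

lemma T_closed:
  "T q s h m r w = (if length w = r \<and> h + (\<Sum>j<length w. bar (w ! j)) = m
      then (\<Prod>i<length w. qint q (h + s + (\<Sum>j<i. bar (w ! j)))) else 0)"
proof (induction w arbitrary: h r)
  case Nil then show ?case by (cases r) simp_all
next
  case (Cons a w)
  show ?case
  proof (cases r)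
    case 0 then show ?thesis by simp
  next
    case (Suc r')
    have p: "(\<Prod>i<length (a # w). qint q (h + s + (\<Sum>j<i. bar ((a # w) ! j))))
        = qint q (h + s) * (\<Prod>i<length w. qint q (h + bar a + s + (\<Sum>j<i. bar (w ! j))))"
      unfolding length_Cons prod.lessThan_Suc_shift sum_pref_Cons by (simp add: algebra_simps del: sum.lessThan_Suc prod.lessThan_Suc)
    have e: "(h + (\<Sum>j<length (a # w). bar ((a # w) ! j)) = m) = (h + bar a + (\<Sum>j<length w. bar (w ! j)) = m)"
      by (simp only: length_Cons sum_pref_Cons) (simp add: algebra_simps)
    let ?C = "length w = r' \<and> h + bar a + (\<Sum>j<length w. bar (w ! j)) = m"
    let ?P = "\<Prod>i<length w. qint q (h + bar a + s + (\<Sum>j<i. bar (w ! j)))"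
    have L: "T q s h m r (a # w) = (if ?C then qint q (h + s) * ?P else 0)"
    proof -
      have "T q s h m r (a # w) = qint q (h + s) * T q s (h + bar a) m r' w" unfolding Suc by simp
      also have "\<dots> = qint q (h + s) * (if ?C then ?P else 0)" unfolding Cons.IH[of "h + bar a" r'] ..
      also have "\<dots> = (if ?C then qint q (h + s) * ?P else 0)" by (rule if_distrib_mult)
      finally show ?thesis .
    qed
    have C: "(length (a # w) = r \<and> h + bar a + (\<Sum>j<length w. bar (w ! j)) = m) = ?C"
      using Suc by simp
    show ?thesis unfolding p e C L ..
  qed
qed

lemma T_nonneg: "h \<ge> 0 \<Longrightarrow> T q 1 h m r w \<noteq> 0 \<Longrightarrow> \<forall>i<length w. h + (\<Sum>j<i. bar (w ! j)) \<ge> 0"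
proof (induction w arbitrary: h r)
  case Nil then show ?case by simp
next
  case (Cons a w)
  obtain r' where r: "r = Suc r'" using Cons.prems by (cases r) auto
  have nz: "T q 1 (h + bar a) m r' w \<noteq> 0" using Cons.prems r by auto
  show ?case
  proof (intro allI impI)
    fix i assume i: "i < length (a # w)"
    show "h + (\<Sum>j<i. bar ((a # w) ! j)) \<ge> 0"
    proof (cases i)
      case 0 then show ?thesis using Cons.prems by simp
    next
      case (Suc i')
      have s: "(\<Sum>j<i. bar ((a # w) ! j)) = bar a + (\<Sum>j<i'. bar (w ! j))"
        unfolding Suc by (rule sum_pref_Cons)
      show ?thesis
      proof (cases "h + bar a \<ge> 0")
        case True
        then show ?thesis using Cons.IH[OF True nz] i Suc s by auto
      next
        case False
        then have hm: "h + bar a = -1" using Cons.prems by (cases a) auto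
        have "w = []"
        proof (rule ccontr)
          assume "w \<noteq> []"
          then obtain b w' where "w = b # w'" by (cases w) auto
          with nz hm show False by (cases r') simp_all
        qed
        then show ?thesis using i Suc by simp
      qed
    qed
  qed
qed

lemma Cat_Cn:
  assumes c: "(q::'a::field) - inverse q \<noteq> 0"
  shows "Cat q n = Cn q n"
proof
  fix w
  let ?S = "\<lambda>i. (\<Sum>j<i. bar (w ! j))"
  have Cn_eq: "Cn q n w = (if length w = 2 * n \<and> ?S (length w) = 0 then (\<Prod>i<length w. qint q (1 + ?S i)) else 0)"
    unfolding Cn_def T_closed add_0_left ..
  show "Cat q n w = Cn q n w"
  proof (cases "catalan w \<and> length w = 2 * n")
    case True
    then have "catalan w" by simp
    then have S0: "?S (length w) = 0" unfolding catalan_def by blast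
    have "(\<Prod>i\<le>2 * n. qint q (1 + ?S i)) = (\<Prod>i<length w. qint q (1 + ?S i)) * qint q (1 + ?S (length w))"
      using True by (simp add: lessThan_Suc_atMost[symmetric])
    also have "\<dots> = (\<Prod>i<length w. qint q (1 + ?S i))" using S0 qint1[OF c] by simp
    finally show ?thesis using True S0 unfolding Cat_def Cn_eq by simp
  next
    case False
    have "Cn q n w = 0"
    proof (rule ccontr)
      assume nz: "Cn q n w \<noteq> 0"
      then have L: "length w = 2 * n" and S0: "?S (length w) = 0" using Cn_eq by (auto split: if_splits)
      have "T q 1 0 0 (2 * n) w \<noteq> 0" using nz by (simp add: Cn_def)
      from T_nonneg[OF _ this] have nn: "\<forall>i<length w. 0 \<le> ?S i" by simp
      have "catalan w" unfolding catalan_def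
      proof (intro conjI allI impI)
        fix i assume "1 \<le> i \<and> i \<le> length w - 1"
        then have "i < length w" by auto
        then show "0 \<le> ?S i" using nn by simp
      qed (use S0 in simp)
      with False L show False by simp
    qed
    moreover have F: "(catalan w \<and> length w = 2 * n) = False" using False by simp
    ultimately show ?thesis unfolding Cat_def F if_False by simp
  qed
qed

theorem corollary8p5:
  fixes q :: "'a::field_char_0" and k l :: nat
  assumes "q \<noteq> 0" and "\<forall>n::nat. n > 0 \<longrightarrow> q ^ n \<noteq> 1"
  shows "conc (wd [X]) (Cat q (k + l + 1)) =
           (\<lambda>w. (star q (conc (wd [X]) (Cat q l)) (conc (conc (wd [X]) (Cat q k)) (wd [Y])) w
                 - star q (conc (conc (wd [X]) (Cat q k)) (wd [Y])) (conc (wd [X]) (Cat q l)) w)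
                / (q - inverse q))
     \<and> conc (Cat q (k + l + 1)) (wd [Y]) =
           (\<lambda>w. (star q (conc (conc (wd [X]) (Cat q k)) (wd [Y])) (conc (Cat q l) (wd [Y])) w
                 - star q (conc (Cat q l) (wd [Y])) (conc (conc (wd [X]) (Cat q k)) (wd [Y])) w)
                / (q - inverse q))"
proof -
  have q: "q \<noteq> 0" by (rule assms(1))
  have q2: "q^2 \<noteq> 1" using assms(2) by auto
  have q4: "q^4 \<noteq> 1" using assms(2) by auto
  have c: "q*q - 1 \<noteq> 0" using q2 by (simp add: power2_eq_square)
  have c4: "q^4 - 1 \<noteq> 0" using q4 by simp
  have cc: "q - inverse q \<noteq> 0" using q c by (simp add: field_simps)
  have A: "\<And>n. conc (wd [X]) (Cat q n) = Xn q n"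
    by (simp add: Cat_Cn[OF cc] conc_wdX Xn_def)
  have B: "\<And>n. conc (conc (wd [X]) (Cat q n)) (wd [Y]) = Gn q n"
    by (simp add: Cat_Cn[OF cc] conc_wdX conc_Px_Y conc_Cn_Y[OF cc] Gn_def)
  have C: "\<And>n. conc (Cat q n) (wd [Y]) = Yn q n"
    by (simp add: Cat_Cn[OF cc] conc_Cn_Y[OF cc])
  have m1: "\<And>w. star q (Xn q l) (Gn q k) w - star q (Gn q k) (Xn q l) w = (q - inverse q) * Xn q (k + l + 1) w"
    using main1[OF q c c4, of l k] unfolding com_def by meson
  have m2: "\<And>w. star q (Gn q k) (Yn q l) w - star q (Yn q l) (Gn q k) w = (q - inverse q) * Yn q (k + l + 1) w"
    using main2[OF q c c4, of k l] unfolding com_def by meson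
  show ?thesis unfolding B unfolding A C m1 m2 using cc by simp
qed

end
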